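(* For every $k\ge3$, the distribution $P_{k\text{-BAL}}$ satisfies SYM, BAL, MIN and UNI.
   Context: $\Omega=\{\pm1\}$, $q=2$, $k\ge3$. Let $\lambda=\lambda(k)\in(0,1)$ be the unique root in $(0,1)$ of $(1-\lambda)(1+\lambda)^{k-1}-1=0$. For $\tau\in\Omega^k$ let $\psi_\tau(\sigma)=\lambda^{\sum_{j=1}^k\mathbf 1\{\sigma_j=\tau_j\}}\big(1-\prod_{i=1}^k\mathbf 1\{\sigma_i=-\tau_i\}\big)$, and let $P_{k\text{-BAL}}$ be the uniform distribution on these $2^k$ functions. $\boldsymbol\psi$ denotes a sample from $P=P_{k\text{-BAL}}$, $\xi=q^{-k}\sum_{\sigma\in\Omega^k}\mathbb E[\boldsymbol\psi(\sigma)]$, $\psi^\theta(\sigma)=\psi(\sigma_{\theta(1)},\dots,\sigma_{\theta(k)})$. SYM: for all $i\in[k]$, $\omega\in\Omega$, $\psi$ in the support, $\sum_{\tau\in\Omega^k}\mathbf 1\{\tau_i=\omega\}\psi(\tau)=q^{k-1}\xi$, and $P(\psi)=P(\psi^\theta)$ for every permutation $\theta$. BAL: $\phi(\mu)=\sum_{\tau\in\Omega^k}\mathbb E[\boldsymbol\psi(\tau)]\prod_{i=1}^k\mu(\tau_i)$ is concave on distributions $\mu$ on $\Omega$ and maximised at the uniform distribution. MIN: among distributions $\rho$ on $\Omega\times\Omega$ with both marginals uniform, $\varphi(\rho)=\sum_{\sigma,\tau\in\Omega^k}\mathbb E[\boldsymbol\psi(\sigma)\boldsymbol\psi(\tau)]\prod_{i=1}^k\rho(\sigma_i,\tau_i)$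 has the uniform distribution as unique global minimiser. UNI: every CSP with constraint functions from the support of $P$ (constraint $a$ on a $k$-tuple $\partial a$ of variables) in which each constraint has pairwise distinct variables and whose bipartite variable–constraint graph is unicyclic admits $\sigma$ with $\prod_a\psi_a(\sigma(\partial a))>0$. *)

theory Defs
  imports "HOL-Probability.Probability" "HOL-Combinatorics.Permutations"
begin

text \<open>Omega = {+1,-1} is encoded as bool (True = +1, False = -1, so -x is Not x); q = 2.
  Elements of Omega^k are bool lists of length k (index j < k stands for j+1).
  Constraint functions are maps bool list => real; only their values on lists of
  length k matter.\<close>

definition cube :: "nat \<Rightarrow> bool list set" where
  "cube k = {xs. length xs = k}"

definition lam :: "nat \<Rightarrow> real" where
  "lam k = (THE l. 0 < l \<and> l < 1 \<and> (1 - l) * (1 + l) ^ (k - 1) - 1 = 0)"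

definition psi_bal :: "nat \<Rightarrow> bool list \<Rightarrow> bool list \<Rightarrow> real" where
  "psi_bal k \<tau> \<sigma> =
     (if length \<sigma> = k then
        lam k ^ card {j. j < k \<and> \<sigma> ! j = \<tau> ! j}
        * (1 - (\<Prod>i<k. if \<sigma> ! i = (\<not> \<tau> ! i) then 1 else 0))
      else 0)"

definition P_kBAL :: "nat \<Rightarrow> (bool list \<Rightarrow> real) pmf" where
  "P_kBAL k = map_pmf (psi_bal k) (pmf_of_set (cube k))"

definition Epsi :: "(bool list \<Rightarrow> real) pmf \<Rightarrow> bool list \<Rightarrow> real" where
  "Epsi P \<sigma> = measure_pmf.expectation P (\<lambda>\<psi>. \<psi> \<sigma>)"

definition xi :: "(bool list \<Rightarrow> real) pmf \<Rightarrow> nat \<Rightarrow> real" where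
  "xi P k = (1 / 2 ^ k) * (\<Sum>\<sigma>\<in>cube k. Epsi P \<sigma>)"

definition perm_fun :: "nat \<Rightarrow> (nat \<Rightarrow> nat) \<Rightarrow> (bool list \<Rightarrow> real) \<Rightarrow> bool list \<Rightarrow> real" where
  "perm_fun k \<theta> \<psi> \<sigma> =
     (if length \<sigma> = k then \<psi> (map (\<lambda>i. \<sigma> ! \<theta> i) [0..<k]) else \<psi> \<sigma>)"

definition SYM :: "(bool list \<Rightarrow> real) pmf \<Rightarrow> nat \<Rightarrow> bool" where
  "SYM P k \<longleftrightarrow>
     (\<forall>i<k. \<forall>\<omega>::bool. \<forall>\<psi>\<in>set_pmf P.
        (\<Sum>\<tau>\<in>cube k. (if \<tau> ! i = \<omega> then 1 else 0) * \<psi> \<tau>) = 2 ^ (k - 1) * xi P k)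
   \<and> (\<forall>\<theta>. \<theta> permutes {..<k} \<longrightarrow> (\<forall>\<psi>. pmf P \<psi> = pmf P (perm_fun k \<theta> \<psi>)))"

definition is_distr :: "('a::finite \<Rightarrow> real) \<Rightarrow> bool" where
  "is_distr \<mu> \<longleftrightarrow> (\<forall>x. 0 \<le> \<mu> x) \<and> (\<Sum>x\<in>UNIV. \<mu> x) = 1"

definition phi_BAL :: "(bool list \<Rightarrow> real) pmf \<Rightarrow> nat \<Rightarrow> (bool \<Rightarrow> real) \<Rightarrow> real" where
  "phi_BAL P k \<mu> = (\<Sum>\<tau>\<in>cube k. Epsi P \<tau> * (\<Prod>i<k. \<mu> (\<tau> ! i)))"

definition BAL :: "(bool list \<Rightarrow> real) pmf \<Rightarrow> nat \<Rightarrow> bool" where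
  "BAL P k \<longleftrightarrow>
     (\<forall>\<mu>1 \<mu>2 u. is_distr \<mu>1 \<and> is_distr \<mu>2 \<and> 0 \<le> u \<and> u \<le> 1 \<longrightarrow>
        u * phi_BAL P k \<mu>1 + (1 - u) * phi_BAL P k \<mu>2
          \<le> phi_BAL P k (\<lambda>x. u * \<mu>1 x + (1 - u) * \<mu>2 x))
   \<and> (\<forall>\<mu>. is_distr \<mu> \<longrightarrow> phi_BAL P k \<mu> \<le> phi_BAL P k (\<lambda>_. 1 / 2))"

definition phi_MIN :: "(bool list \<Rightarrow> real) pmf \<Rightarrow> nat \<Rightarrow> (bool \<times> bool \<Rightarrow> real) \<Rightarrow> real" where
  "phi_MIN P k \<rho> = (\<Sum>\<sigma>\<in>cube k. \<Sum>\<tau>\<in>cube k.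
      measure_pmf.expectation P (\<lambda>\<psi>. \<psi> \<sigma> * \<psi> \<tau>) * (\<Prod>i<k. \<rho> (\<sigma> ! i, \<tau> ! i)))"

definition uniform_marginals :: "(bool \<times> bool \<Rightarrow> real) \<Rightarrow> bool" where
  "uniform_marginals \<rho> \<longleftrightarrow> is_distr \<rho> \<and>
     (\<forall>a. (\<Sum>b\<in>UNIV. \<rho> (a, b)) = 1 / 2) \<and> (\<forall>b. (\<Sum>a\<in>UNIV. \<rho> (a, b)) = 1 / 2)"

definition MIN_prop :: "(bool list \<Rightarrow> real) pmf \<Rightarrow> nat \<Rightarrow> bool" where
  "MIN_prop P k \<longleftrightarrow> uniform_marginals (\<lambda>_. 1 / 4) \<and>
     (\<forall>\<rho>. uniform_marginals \<rho> \<and> \<rho> \<noteq> (\<lambda>_. 1 / 4) \<longrightarrow>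
        phi_MIN P k (\<lambda>_. 1 / 4) < phi_MIN P k \<rho>)"

text \<open>Simple undirected graphs: vertex set W, edge set E of 2-element subsets.\<close>
definition connected_graph :: "'a set \<Rightarrow> 'a set set \<Rightarrow> bool" where
  "connected_graph W E \<longleftrightarrow>
     (\<forall>u\<in>W. \<forall>v\<in>W. (u, v) \<in> {(x, y). {x, y} \<in> E}\<^sup>*)"

definition is_cycle :: "'a set set \<Rightarrow> 'a set set \<Rightarrow> bool" where
  "is_cycle E C \<longleftrightarrow> C \<subseteq> E \<and> C \<noteq> {} \<and>
     (\<forall>v\<in>\<Union>C. card {e\<in>C. v \<in> e} = 2) \<and> connected_graph (\<Union>C) C"

definition unicyclic :: "'a set \<Rightarrow> 'a set set \<Rightarrow> bool" where
  "unicyclic W E \<longleftrightarrow> connected_graph W E \<and> (\<exists>!C. is_cycle E C)"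

definition fg_vertices :: "nat set \<Rightarrow> nat set \<Rightarrow> (nat + nat) set" where
  "fg_vertices V A = Inl ` V \<union> Inr ` A"

definition fg_edges :: "nat set \<Rightarrow> (nat \<Rightarrow> nat list) \<Rightarrow> (nat + nat) set set" where
  "fg_edges A dv = {{Inl x, Inr a} | x a. a \<in> A \<and> x \<in> set (dv a)}"

definition UNI :: "(bool list \<Rightarrow> real) pmf \<Rightarrow> nat \<Rightarrow> bool" where
  "UNI P k \<longleftrightarrow>
     (\<forall>(V::nat set) (A::nat set) (dv::nat \<Rightarrow> nat list) (ps::nat \<Rightarrow> bool list \<Rightarrow> real).
        finite V \<and> finite A \<and>
        (\<forall>a\<in>A. length (dv a) = k \<and> distinct (dv a) \<and> set (dv a) \<subseteq> V \<and> ps a \<in> set_pmf P) \<and>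
        unicyclic (fg_vertices V A) (fg_edges A dv)
        \<longrightarrow> (\<exists>\<sigma>::nat \<Rightarrow> bool. 0 < (\<Prod>a\<in>A. ps a (map \<sigma> (dv a)))))"

end

theory Submission
  imports Defs
begin

lemma cube_Suc: "cube (Suc k) = (\<lambda>(x,xs). x # xs) ` (UNIV \<times> cube k)"
  unfolding cube_def by (auto simp: image_iff length_Suc_conv)

lemma finite_cube: "finite (cube k)"
proof (induction k)
  case 0 then show ?case by (simp add: cube_def)
next
  case (Suc k) then show ?case by (simp add: cube_Suc)
qed

lemma cube_ne: "cube k \<noteq> {}"
  unfolding cube_def by (auto intro: exI[of _ "replicate k True"])

lemma sum_cube_prod:
  "(\<Sum>\<tau>\<in>cube k. \<Prod>i<k. f i (\<tau> ! i)) = (\<Prod>i<k. f i True + f i False :: real)"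
proof (induction k arbitrary: f)
  case 0 then show ?case by (simp add: cube_def)
next
  case (Suc k)
  have inj: "inj_on (\<lambda>(x,xs). x # xs) (UNIV \<times> cube k)" by (auto simp: inj_on_def)
  have "(\<Sum>\<tau>\<in>cube (Suc k). \<Prod>i<Suc k. f i (\<tau> ! i))
      = (\<Sum>p\<in>UNIV \<times> cube k. \<Prod>i<Suc k. f i ((fst p # snd p) ! i))"
    unfolding cube_Suc by (subst sum.reindex[OF inj]) (auto intro!: sum.cong simp: case_prod_beta)
  also have "\<dots> = (\<Sum>x\<in>UNIV. \<Sum>xs\<in>cube k. f 0 x * (\<Prod>i<k. f (Suc i) (xs ! i)))"
    by (simp add: sum.cartesian_product prod.lessThan_Suc_shift case_prod_beta del: prod.lessThan_Suc)
  also have "\<dots> = (\<Sum>x\<in>UNIV. f 0 x * (\<Prod>i<k. f (Suc i) True + f (Suc i) False))"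
    by (simp add: sum_distrib_left[symmetric] Suc.IH[of "\<lambda>i. f (Suc i)"])
  also have "\<dots> = (\<Prod>i<Suc k. f i True + f i False)"
    by (simp add: prod.lessThan_Suc_shift UNIV_bool algebra_simps del: prod.lessThan_Suc)
  finally show ?case .
qed

lemma card_cube: "real (card (cube k)) = 2 ^ k"
proof -
  have "real (card (cube k)) = (\<Sum>\<tau>\<in>cube k. \<Prod>i<k. (\<lambda>i b. 1::real) i (\<tau> ! i))" by simp
  also have "\<dots> = 2 ^ k" by (subst sum_cube_prod) simp
  finally show ?thesis .
qed

lemma sum_cube_prod2:
  "(\<Sum>\<sigma>\<in>cube k. \<Sum>\<tau>\<in>cube k. \<Prod>i<k. f i (\<sigma> ! i) (\<tau> ! i))
    = (\<Prod>i<k. f i True True + f i True False + f i False True + f i False False :: real)"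
proof -
  have "(\<Sum>\<sigma>\<in>cube k. \<Sum>\<tau>\<in>cube k. \<Prod>i<k. f i (\<sigma> ! i) (\<tau> ! i))
     = (\<Sum>\<sigma>\<in>cube k. \<Prod>i<k. (\<lambda>i b. f i b True + f i b False) i (\<sigma> ! i))"
    by (rule sum.cong[OF refl]) (rule sum_cube_prod)
  also have "\<dots> = (\<Prod>i<k. f i True True + f i True False + f i False True + f i False False :: real)" by (subst sum_cube_prod) (simp add: algebra_simps)
  finally show ?thesis .
qed

lemma pow32: "(3/2::real) ^ (n+2) > (real n + 4) / 2"
proof (induction n)
  case 0 then show ?case by simp
next
  case (Suc n)
  have "(3/2::real) ^ (Suc n + 2) = 3/2 * (3/2) ^ (n+2)" by simp
  also have "\<dots> > 3/2 * ((real n + 4) / 2)" using Suc by simp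
  finally show ?case by simp
qed

lemma fderiv:
  fixes n :: nat
  shows "((\<lambda>t::real. (1-t)*(1+t)^(Suc n) - 1) has_real_derivative (1+t)^n * (real n - (real n + 2) * t)) (at t)"
proof -
  have d1: "((\<lambda>t::real. 1 + t) has_real_derivative 1) (at t)"
    by (auto intro!: derivative_eq_intros)
  have d2: "((\<lambda>t::real. (1+t)^(Suc n)) has_real_derivative (1 + real n) * (1 * (1+t)^n)) (at t)"
    by (rule DERIV_power_Suc[OF d1])
  have d3: "((\<lambda>t::real. 1 - t) has_real_derivative -1) (at t)"
    by (auto intro!: derivative_eq_intros)
  have "((\<lambda>t::real. (1-t)*(1+t)^(Suc n) - 1) has_real_derivative
        (1-t) * ((1 + real n) * (1 * (1+t)^n)) + (-1) * (1+t)^(Suc n) - 0) (at t)"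
    by (rule DERIV_diff[OF DERIV_mult'[OF d3 d2] DERIV_const])
  moreover have "(1-t) * ((1 + real n) * (1 * (1+t)^n)) + (-1) * (1+t)^(Suc n) - 0 = (1+t)^n * (real n - (real n + 2) * t)"
    by (simp add: algebra_simps)
  ultimately show ?thesis by simp
qed

lemma lam_props:
  assumes k: "k \<ge> 3"
  shows "0 < lam k \<and> lam k < 1 \<and> (1 - lam k) * (1 + lam k) ^ (k - 1) = 1
         \<and> (real k - 1) / (real k + 1) < lam k"
proof -
  obtain n where kn: "k = n + 3" using k by (metis add.commute le_iff_add)
  define f where "f = (\<lambda>t::real. (1-t)*(1+t)^(Suc (Suc n)) - 1)"
  have km1: "k - 1 = Suc (Suc n)" using kn by simp
  define l0 where "l0 = (real k - 1) / (real k + 1)"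
  have l0: "0 < l0" "l0 < 1" unfolding l0_def using k by (auto simp: field_simps)
  have fl0: "f l0 > 0"
  proof -
    have a: "1 - l0 = 2 / (real k + 1)" "1 + l0 = 2 * real k / (real k + 1)"
      unfolding l0_def by (auto simp: field_simps)
    have b: "(3/2::real) \<le> 2 * real k / (real k + 1)" using k by (auto simp: field_simps)
    have "(3/2::real) ^ (n+2) \<le> (2 * real k / (real k + 1)) ^ (n+2)"
      by (rule power_mono[OF b]) simp
    with pow32[of n] have "(real n + 4)/2 < (2 * real k / (real k + 1)) ^ (n+2)" by linarith
    hence "2 / (real k + 1) * ((real n + 4)/2) < 2 / (real k + 1) * (2 * real k / (real k + 1)) ^ (n+2)"
      by (rule mult_strict_left_mono) simp
    moreover have "2 / (real k + 1) * ((real n + 4)/2) = 1" using kn by simp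
    ultimately have "1 < 2 / (real k + 1) * (2 * real k / (real k + 1)) ^ (n+2)" by linarith
    moreover have "f l0 = 2 / (real k + 1) * (2 * real k / (real k + 1)) ^ (n+2) - 1"
      unfolding f_def a by (simp add: eval_nat_numeral)
    ultimately show ?thesis by simp
  qed
  have cont: "\<forall>x. l0 \<le> x \<and> x \<le> 1 \<longrightarrow> isCont f x" unfolding f_def by (auto intro!: continuous_intros)
  have f1: "f 1 = -1" unfolding f_def by simp
  obtain x where x: "l0 \<le> x" "x \<le> 1" "f x = 0"
    using IVT2[of f 1 0 l0] cont f1 fl0 l0 by force
  have x1: "l0 < x" "x < 1" using x fl0 f1 by (auto simp: order.order_iff_strict)
  define m where "m = (real n + 1) / (real n + 3)"
  have incr: "f a < f b" if "0 \<le> a" "a < b" "b \<le> m" for a b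
  proof (rule DERIV_pos_imp_increasing_open[OF that(2)])
    fix t assume t: "a < t" "t < b"
    have tb: "t*(real n+3) < b*(real n+3)" using t that by (intro mult_strict_right_mono) auto
    have "b*(real n+3) \<le> real n + 1" using that(3) unfolding m_def by (simp add: field_simps)
    hence p1: "real n + 1 - (real n + 3) * t > 0" using tb by (simp add: algebra_simps)
    have p2: "(1+t)^Suc n > 0" using t that by simp
    show "\<exists>y. (f has_real_derivative y) (at t) \<and> 0 < y"
    proof (intro exI conjI)
      have e: "real (Suc n) - (real (Suc n) + 2) * t = real n + 1 - (real n + 3)*t" by simp
      show "(f has_real_derivative (1+t)^Suc n * (real n + 1 - (real n + 3)*t)) (at t)"
        unfolding f_def using fderiv[of "Suc n" t] unfolding e .
    qed (use p1 p2 in \<open>auto intro: mult_pos_pos\<close>)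
  next
    show "continuous_on {a..b} f" unfolding f_def by (auto intro!: continuous_intros)
  qed
  have decr: "f a > f b" if "m \<le> a" "a < b" for a b
  proof (rule DERIV_neg_imp_decreasing_open[OF that(2)])
    fix t assume t: "a < t" "t < b"
    have m0: "0 \<le> m" unfolding m_def by simp
    have tb: "a*(real n+3) < t*(real n+3)" using t that by (intro mult_strict_right_mono) auto
    have "a*(real n+3) \<ge> real n + 1" using that(1) unfolding m_def by (simp add: field_simps)
    hence p1: "real n + 1 - (real n + 3) * t < 0" using tb by (simp add: algebra_simps)
    have p2: "(1+t)^Suc n > 0" using t that m0 by simp
    show "\<exists>y. (f has_real_derivative y) (at t) \<and> y < 0"
    proof (intro exI conjI)
      have e: "real (Suc n) - (real (Suc n) + 2) * t = real n + 1 - (real n + 3)*t" by simp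
      show "(f has_real_derivative (1+t)^Suc n * (real n + 1 - (real n + 3)*t)) (at t)"
        unfolding f_def using fderiv[of "Suc n" t] unfolding e .
    qed (use p1 p2 in \<open>auto intro: mult_pos_neg\<close>)
  next
    show "continuous_on {a..b} f" unfolding f_def by (auto intro!: continuous_intros)
  qed
  have f0: "f 0 = 0" unfolding f_def by simp
  have gtm: "m < y" if "0 < y" "f y = 0" for y
  proof (rule ccontr)
    assume "\<not> m < y" then have "y \<le> m" by simp
    from incr[OF _ that(1) this] f0 that show False by simp
  qed
  have ml0: "m < l0" unfolding m_def l0_def using kn by (auto simp: field_simps)
  have uniq: "y = x" if "0 < y" "y < 1" "f y = 0" for y
  proof -
    have "m < y" using gtm that by simp
    moreover have "m < x" using ml0 x1 by simp
    ultimately show ?thesis using decr[of y x] decr[of x y] that x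
      by (cases y x rule: linorder_cases) auto
  qed
  have P: "0 < x \<and> x < 1 \<and> (1 - x) * (1 + x) ^ (k - 1) - 1 = 0"
    using x1 l0 x(3) unfolding f_def km1 by auto
  have "lam k = x" unfolding lam_def
  proof (rule the_equality)
    show "0 < x \<and> x < 1 \<and> (1 - x) * (1 + x) ^ (k - 1) - 1 = 0" by (rule P)
    fix y :: real assume "0 < y \<and> y < 1 \<and> (1 - y) * (1 + y) ^ (k - 1) - 1 = 0"
    then show "y = x" using uniq unfolding f_def km1 by auto
  qed
  then show ?thesis using P x1 unfolding l0_def by auto
qed

lemma prod_if_pow: "(\<Prod>j<k. if P j then x else 1) = (x::real) ^ card {j. j<(k::nat) \<and> P j}"
proof -
  have e: "{..<k} \<inter> Collect P = {j. j<k \<and> P j}" by auto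
  show ?thesis by (simp add: prod.If_cases e)
qed

lemma prod_01: "(\<Prod>i<(k::nat). if Q i then 1 else 0 :: real) = (if \<forall>i<k. Q i then 1 else 0)"
proof (cases "\<forall>i<k. Q i")
  case True then show ?thesis by (auto intro!: prod.neutral)
next
  case False
  then obtain i where "i < k" "\<not> Q i" by auto
  then have "(\<Prod>i<(k::nat). if Q i then 1 else 0 :: real) = 0" by (subst prod_zero_iff) auto
  then show ?thesis using False by simp
qed

lemma psi_prod:
  assumes "length \<sigma> = k"
  shows "psi_bal k \<tau> \<sigma> = (\<Prod>j<k. if \<sigma>!j = \<tau>!j then lam k else 1) - (\<Prod>j<k. if \<sigma>!j = (\<not> \<tau>!j) then 1 else 0)"
proof -
  have L: "lam k ^ card {j. j < k \<and> \<sigma> ! j = \<tau> ! j} = (\<Prod>j<k. if \<sigma>!j = \<tau>!j then lam k else 1)"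
    by (simp add: prod_if_pow)
  show ?thesis
  proof (cases "\<forall>i<k. \<sigma>!i = (\<not> \<tau>!i)")
    case True
    then have "(\<Prod>j<k. if \<sigma>!j = \<tau>!j then lam k else 1) = 1" by (auto intro!: prod.neutral)
    then show ?thesis using True assms unfolding psi_bal_def L by (simp add: prod_01)
  next
    case False
    then show ?thesis using assms unfolding psi_bal_def L by (simp add: prod_01)
  qed
qed

lemma prod_one_except:
  assumes "i < k"
  shows "(\<Prod>j<k. f j) = f i * (\<Prod>j\<in>{..<(k::nat)}-{i}. f j :: real)"
  using assms by (subst prod.remove[of _ i]) auto

lemma prod_const_except:
  assumes "i < (k::nat)" "\<And>j. j \<noteq> i \<Longrightarrow> f j = c"
  shows "(\<Prod>j<k. f j) = f i * (c :: real) ^ (k - 1)"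
proof -
  have "(\<Prod>j\<in>{..<k}-{i}. f j) = (\<Prod>j\<in>{..<k}-{i}. c)" using assms(2) by (intro prod.cong) auto
  also have "\<dots> = c ^ (k-1)" using assms(1) by simp
  finally show ?thesis using prod_one_except[OF assms(1)] by simp
qed

lemma ifsum: "(if b then x else y) + (if \<not> b then x else y) = (x::real) + y" by auto
lemma ifsum2: "(if \<not> b then 1 else 0) + (if b then 1 else 0) = (1::real)" by auto

definition cst :: "nat \<Rightarrow> real" where "cst k = ((1 + lam k) ^ k - 1) / 2 ^ k"

lemma sum_psi_tau:
  assumes "length \<sigma> = k"
  shows "(\<Sum>\<tau>\<in>cube k. psi_bal k \<tau> \<sigma>) = (1 + lam k) ^ k - 1"
proof -
  have G: "(\<Sum>\<tau>\<in>cube k. \<Prod>j<k. if \<sigma>!j = \<tau>!j then lam k else 1) = (1 + lam k) ^ k"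
    using sum_cube_prod[where k=k and f="\<lambda>j b. if \<sigma>!j = b then lam k else 1"]
    by (simp add: ifsum add.commute)
  have H: "(\<Sum>\<tau>\<in>cube k. \<Prod>j<k. if \<sigma>!j = (\<not> \<tau>!j) then 1 else 0) = (1::real)"
    using sum_cube_prod[where k=k and f="\<lambda>j b. if \<sigma>!j = (\<not> b) then 1 else (0::real)"]
    by (simp add: ifsum2)
  have "(\<Sum>\<tau>\<in>cube k. psi_bal k \<tau> \<sigma>) = (\<Sum>\<tau>\<in>cube k. (\<Prod>j<k. if \<sigma>!j = \<tau>!j then lam k else 1)
      - (\<Prod>j<k. if \<sigma>!j = (\<not> \<tau>!j) then 1 else 0))"
    using assms by (intro sum.cong refl) (auto simp: psi_prod)
  also have "\<dots> = (1 + lam k) ^ k - 1" unfolding sum_subtractf G H ..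
  finally show ?thesis .
qed

lemma Epsi_eq:
  assumes "length \<sigma> = k"
  shows "Epsi (P_kBAL k) \<sigma> = cst k"
proof -
  have "Epsi (P_kBAL k) \<sigma> = (\<Sum>\<tau>\<in>cube k. psi_bal k \<tau> \<sigma>) / card (cube k)"
    unfolding Epsi_def P_kBAL_def using finite_cube cube_ne by (simp add: integral_pmf_of_set)
  then show ?thesis using sum_psi_tau[OF assms] card_cube unfolding cst_def by simp
qed

lemma xi_eq: "xi (P_kBAL k) k = cst k"
proof -
  have "(\<Sum>\<sigma>\<in>cube k. Epsi (P_kBAL k) \<sigma>) = (\<Sum>\<sigma>\<in>cube k. cst k)"
    by (intro sum.cong refl) (auto simp: Epsi_eq cube_def)
  also have "\<dots> = 2^k * cst k" using card_cube[of k] by simp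
  finally show ?thesis unfolding xi_def by simp
qed

lemma set_P: "set_pmf (P_kBAL k) = psi_bal k ` cube k"
  unfolding P_kBAL_def using finite_cube cube_ne by simp

lemma sym1:
  assumes k: "k \<ge> 3" and i: "i < k" and \<tau>: "length \<tau> = k"
  shows "(\<Sum>\<sigma>\<in>cube k. (if \<sigma> ! i = \<omega> then 1 else 0) * psi_bal k \<tau> \<sigma>) = 2 ^ (k - 1) * xi (P_kBAL k) k"
proof -
  define l where "l = lam k"
  have eq: "(1 - l) * (1 + l) ^ (k - 1) = 1" using lam_props[OF k] unfolding l_def by simp
  define w where "w = (\<lambda>j b. if j = i then (if b = \<omega> then 1 else 0) else (1::real))"
  have "(\<Sum>\<sigma>\<in>cube k. (if \<sigma> ! i = \<omega> then 1 else 0) * psi_bal k \<tau> \<sigma>)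
     = (\<Sum>\<sigma>\<in>cube k. (\<Prod>j<k. (\<lambda>j b. w j b * (if b = \<tau>!j then l else 1)) j (\<sigma>!j))
          - (\<Prod>j<k. (\<lambda>j b. w j b * (if b = (\<not> \<tau>!j) then 1 else 0)) j (\<sigma>!j)))"
  proof (intro sum.cong refl)
    fix \<sigma> assume "\<sigma> \<in> cube k"
    then have s: "length \<sigma> = k" by (simp add: cube_def)
    have wi: "(\<Prod>j<k. w j (\<sigma>!j)) = (if \<sigma> ! i = \<omega> then 1 else 0)"
      using i by (subst prod_const_except[of i _ _ 1]) (auto simp: w_def)
    show "(if \<sigma> ! i = \<omega> then 1 else 0) * psi_bal k \<tau> \<sigma> = (\<Prod>j<k. (\<lambda>j b. w j b * (if b = \<tau>!j then l else 1)) j (\<sigma>!j))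
          - (\<Prod>j<k. (\<lambda>j b. w j b * (if b = (\<not> \<tau>!j) then 1 else 0)) j (\<sigma>!j))"
      unfolding psi_prod[OF s] wi[symmetric] l_def by (simp add: prod.distrib right_diff_distrib)
  qed
  also have "\<dots> = (\<Prod>j<k. w j True * (if True = \<tau>!j then l else 1) + w j False * (if False = \<tau>!j then l else 1))
     - (\<Prod>j<k. w j True * (if True = (\<not> \<tau>!j) then 1 else 0) + w j False * (if False = (\<not> \<tau>!j) then 1 else 0))"
    unfolding sum_subtractf
    using sum_cube_prod[where k=k and f="\<lambda>j b. w j b * (if b = \<tau>!j then l else 1)"]
      sum_cube_prod[where k=k and f="\<lambda>j b. w j b * (if b = (\<not>\<tau>!j) then 1 else 0)"] by simp
  also have "\<dots> = (if \<omega> = \<tau>!i then l else 1) * (1 + l) ^ (k-1) - (if \<omega> = (\<not> \<tau>!i) then 1 else 0) * 1 ^ (k-1)"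
  proof (intro arg_cong2[where f="(-)"])
    show "(\<Prod>j<k. w j True * (if True = \<tau>!j then l else 1) + w j False * (if False = \<tau>!j then l else 1))
       = (if \<omega> = \<tau>!i then l else 1) * (1 + l) ^ (k-1)"
      by (subst prod_const_except[OF i, where c="1+l"]) (auto simp: w_def)
    show "(\<Prod>j<k. w j True * (if True = (\<not> \<tau>!j) then 1 else 0) + w j False * (if False = (\<not> \<tau>!j) then 1 else 0))
       = (if \<omega> = (\<not> \<tau>!i) then 1 else 0) * 1 ^ (k-1)"
      by (subst prod_const_except[OF i, where c="1"]) (auto simp: w_def)
  qed
  also have "\<dots> = l * (1 + l) ^ (k-1)" using eq by (auto simp: algebra_simps)
  also have "\<dots> = 2 ^ (k - 1) * xi (P_kBAL k) k"
  proof -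
    have "(1 + l) ^ k = (1 + l) * (1 + l) ^ (k - 1)" using k by (cases k) auto
    then have "(1 + l) ^ k - 1 = 2 * (l * (1 + l) ^ (k-1))" using eq by (simp add: algebra_simps)
    moreover have "(2::real) ^ k = 2 * 2 ^ (k - 1)" using k by (cases k) auto
    ultimately show ?thesis unfolding xi_eq cst_def l_def by (simp add: field_simps)
  qed
  finally show ?thesis .
qed

lemma sum_prod_mu: "(\<Sum>\<tau>\<in>cube k. \<Prod>i<k. \<mu> (\<tau> ! i)) = (\<mu> True + \<mu> False :: real) ^ k"
  using sum_cube_prod[where k=k and f="\<lambda>i b. \<mu> b"] by simp

lemma phi_BAL_eq: "phi_BAL (P_kBAL k) k \<mu> = cst k * (\<mu> True + \<mu> False) ^ k"
proof -
  have "phi_BAL (P_kBAL k) k \<mu> = (\<Sum>\<tau>\<in>cube k. cst k * (\<Prod>i<k. \<mu> (\<tau> ! i)))"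
    unfolding phi_BAL_def by (intro sum.cong refl) (auto simp: Epsi_eq cube_def)
  then show ?thesis by (simp add: sum_distrib_left[symmetric] sum_prod_mu)
qed

lemma BAL_thm: "BAL (P_kBAL k) k"
  unfolding BAL_def phi_BAL_eq
proof (intro conjI allI impI)
  fix \<mu>1 \<mu>2 :: "bool \<Rightarrow> real" and u :: real
  assume a: "is_distr \<mu>1 \<and> is_distr \<mu>2 \<and> 0 \<le> u \<and> u \<le> 1"
  then have s: "\<mu>1 True + \<mu>1 False = 1" "\<mu>2 True + \<mu>2 False = 1"
    unfolding is_distr_def by (auto simp: UNIV_bool add.commute)
  have "u * \<mu>1 True + (1 - u) * \<mu>2 True + (u * \<mu>1 False + (1 - u) * \<mu>2 False)
     = u * (\<mu>1 True + \<mu>1 False) + (1-u) * (\<mu>2 True + \<mu>2 False)" by (simp add: algebra_simps)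
  also have "\<dots> = 1" using s by simp
  finally show "u * (cst k * (\<mu>1 True + \<mu>1 False) ^ k) + (1 - u) * (cst k * (\<mu>2 True + \<mu>2 False) ^ k)
         \<le> cst k * (u * \<mu>1 True + (1 - u) * \<mu>2 True + (u * \<mu>1 False + (1 - u) * \<mu>2 False)) ^ k"
    using s by (simp add: algebra_simps)
next
  fix \<mu> :: "bool \<Rightarrow> real" assume "is_distr \<mu>"
  then have "\<mu> True + \<mu> False = 1" unfolding is_distr_def by (auto simp: UNIV_bool add.commute)
  then show "cst k * (\<mu> True + \<mu> False) ^ k \<le> cst k * (1 / 2 + 1 / 2) ^ k" by simp
qed

lemma psi_zero: "length \<tau> = k \<Longrightarrow> psi_bal k \<tau> (map Not \<tau>) = 0"
  by (subst psi_prod) (auto intro!: prod.neutral)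

lemma psi_pos:
  assumes k: "k \<ge> 3" and s: "length \<sigma> = k" and i: "i < k" "\<sigma> ! i = \<tau> ! i"
  shows "psi_bal k \<tau> \<sigma> > 0"
proof -
  have z: "(\<Prod>i<k. if \<sigma> ! i = (\<not> \<tau> ! i) then 1 else 0 :: real) = 0"
    using i by (subst prod_zero_iff) auto
  have "lam k > 0" using lam_props[OF k] by simp
  then show ?thesis using s unfolding psi_bal_def z by simp
qed

lemma psi_inj:
  assumes k: "k \<ge> 3"
  shows "inj_on (psi_bal k) (cube k)"
proof (rule inj_onI)
  fix \<tau>1 \<tau>2 assume t: "\<tau>1 \<in> cube k" "\<tau>2 \<in> cube k" and eq: "psi_bal k \<tau>1 = psi_bal k \<tau>2"
  have l: "length \<tau>1 = k" "length \<tau>2 = k" using t by (auto simp: cube_def)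
  show "\<tau>1 = \<tau>2"
  proof (rule ccontr)
    assume "\<tau>1 \<noteq> \<tau>2"
    then obtain i where i: "i < k" "\<tau>1 ! i \<noteq> \<tau>2 ! i" using l nth_equalityI[of \<tau>1 \<tau>2] by auto
    then have "map Not \<tau>2 ! i = \<tau>1 ! i" using l by auto
    then have "psi_bal k \<tau>1 (map Not \<tau>2) > 0" using psi_pos[OF k _ i(1)] l by simp
    moreover have "psi_bal k \<tau>2 (map Not \<tau>2) = 0" using psi_zero[OF l(2)] .
    ultimately show False using eq by simp
  qed
qed

lemma pmf_P:
  assumes k: "k \<ge> 3"
  shows "pmf (P_kBAL k) \<psi> = (if \<psi> \<in> psi_bal k ` cube k then 1 / 2 ^ k else 0)"
proof (cases "\<psi> \<in> psi_bal k ` cube k")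
  case True
  then obtain \<tau> where t: "\<tau> \<in> cube k" "\<psi> = psi_bal k \<tau>" by auto
  have "pmf (P_kBAL k) \<psi> = pmf (pmf_of_set (cube k)) \<tau>"
    unfolding P_kBAL_def t(2) using psi_inj[OF k] finite_cube cube_ne t(1)
    by (intro pmf_map_inj) auto
  also have "\<dots> = 1 / 2 ^ k" using finite_cube cube_ne t(1) card_cube[of k] by simp
  finally show ?thesis using True by simp
next
  case False
  then have "\<psi> \<notin> set_pmf (P_kBAL k)" using set_P by simp
  then show ?thesis using False by (simp add: pmf_eq_0_set_pmf)
qed

lemma perm_psi:
  assumes p: "\<theta> permutes {..<k}" and t: "length \<tau> = k"
  shows "perm_fun k \<theta> (psi_bal k \<tau>) = psi_bal k (map (\<lambda>i. \<tau> ! inv \<theta> i) [0..<k])"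
proof
  fix \<sigma> :: "bool list"
  show "perm_fun k \<theta> (psi_bal k \<tau>) \<sigma> = psi_bal k (map (\<lambda>i. \<tau> ! inv \<theta> i) [0..<k]) \<sigma>"
  proof (cases "length \<sigma> = k")
    case False then show ?thesis unfolding perm_fun_def psi_bal_def by simp
  next
    case True
    have bij: "bij_betw \<theta> {..<k} {..<k}" using p by (rule permutes_imp_bij)
    have th: "\<theta> j < k" if "j < k" for j using bij that by (auto simp: bij_betw_def)
    have iv: "inv \<theta> (\<theta> j) = j" for j using p by (rule permutes_inverses(2))
    have re: "(\<Prod>j<k. g (\<theta> j)) = (\<Prod>i<k. g i)" for g :: "nat \<Rightarrow> real"
      using prod.reindex_bij_betw[OF bij, of g] by simp
    have L: "length (map (\<lambda>i. \<sigma> ! \<theta> i) [0..<k]) = k" by simp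
    define \<tau>' where "\<tau>' = map (\<lambda>i. \<tau> ! inv \<theta> i) [0..<k]"
    have t': "length \<tau>' = k" "\<And>i. i < k \<Longrightarrow> \<tau>' ! i = \<tau> ! inv \<theta> i" unfolding \<tau>'_def by auto
    have m: "\<And>j. j < k \<Longrightarrow> map (\<lambda>i. \<sigma> ! \<theta> i) [0..<k] ! j = \<sigma> ! \<theta> j" by simp
    have "perm_fun k \<theta> (psi_bal k \<tau>) \<sigma> = psi_bal k \<tau> (map (\<lambda>i. \<sigma> ! \<theta> i) [0..<k])"
      using True unfolding perm_fun_def by simp
    also have "\<dots> = (\<Prod>j<k. if \<sigma> ! \<theta> j = \<tau> ! j then lam k else 1) - (\<Prod>j<k. if \<sigma> ! \<theta> j = (\<not> \<tau> ! j) then 1 else 0)"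
      unfolding psi_prod[OF L] by (intro arg_cong2[where f="(-)"] prod.cong refl) (simp_all add: m)
    also have "\<dots> = (\<Prod>j<k. (\<lambda>i. if \<sigma> ! i = \<tau>' ! i then lam k else 1) (\<theta> j))
                     - (\<Prod>j<k. (\<lambda>i. if \<sigma> ! i = (\<not> \<tau>' ! i) then 1 else 0) (\<theta> j))"
      by (intro arg_cong2[where f="(-)"] prod.cong refl) (simp_all add: t' th iv)
    also have "\<dots> = (\<Prod>i<k. if \<sigma> ! i = \<tau>' ! i then lam k else 1) - (\<Prod>i<k. if \<sigma> ! i = (\<not> \<tau>' ! i) then 1 else 0)"
      unfolding re[of "\<lambda>i. if \<sigma> ! i = \<tau>' ! i then lam k else 1"] re[of "\<lambda>i. if \<sigma> ! i = (\<not> \<tau>' ! i) then 1 else 0"] ..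
    also have "\<dots> = psi_bal k \<tau>' \<sigma>" using psi_prod[OF True] by simp
    finally show ?thesis unfolding \<tau>'_def .
  qed
qed

lemma perm_inv:
  assumes p: "\<theta> permutes {..<k}"
  shows "perm_fun k (inv \<theta>) (perm_fun k \<theta> \<psi>) = \<psi>"
proof
  fix \<sigma> :: "bool list"
  show "perm_fun k (inv \<theta>) (perm_fun k \<theta> \<psi>) \<sigma> = \<psi> \<sigma>"
  proof (cases "length \<sigma> = k")
    case False then show ?thesis unfolding perm_fun_def by simp
  next
    case True
    have bij: "bij_betw \<theta> {..<k} {..<k}" using p by (rule permutes_imp_bij)
    have th: "\<theta> j < k" if "j < k" for j using bij that by (auto simp: bij_betw_def)
    have iv: "inv \<theta> (\<theta> j) = j" for j using p by (rule permutes_inverses(2))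
    have "map (\<lambda>i. map (\<lambda>i. \<sigma> ! inv \<theta> i) [0..<k] ! \<theta> i) [0..<k] = \<sigma>"
      using True by (intro nth_equalityI) (auto simp: th iv)
    then show ?thesis unfolding perm_fun_def using True by simp
  qed
qed

lemma sym2:
  assumes k: "k \<ge> 3" and p: "\<theta> permutes {..<k}"
  shows "pmf (P_kBAL k) \<psi> = pmf (P_kBAL k) (perm_fun k \<theta> \<psi>)"
proof -
  have img: "perm_fun k \<theta>' \<psi>' \<in> psi_bal k ` cube k"
    if q1: "\<theta>' permutes {..<k}" and q2: "\<psi>' \<in> psi_bal k ` cube k" for \<theta>' \<psi>'
  proof -
    obtain \<tau> where t: "\<tau> \<in> cube k" "\<psi>' = psi_bal k \<tau>" using q2 by auto
    then have "perm_fun k \<theta>' \<psi>' = psi_bal k (map (\<lambda>i. \<tau> ! inv \<theta>' i) [0..<k])"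
      using perm_psi[OF q1] by (simp add: cube_def)
    then show ?thesis by (auto simp: cube_def)
  qed
  have "\<psi> \<in> psi_bal k ` cube k \<longleftrightarrow> perm_fun k \<theta> \<psi> \<in> psi_bal k ` cube k"
  proof
    assume "\<psi> \<in> psi_bal k ` cube k" then show "perm_fun k \<theta> \<psi> \<in> psi_bal k ` cube k" by (rule img[OF p])
  next
    assume "perm_fun k \<theta> \<psi> \<in> psi_bal k ` cube k"
    then have "perm_fun k (inv \<theta>) (perm_fun k \<theta> \<psi>) \<in> psi_bal k ` cube k"
      by (rule img[OF permutes_inv[OF p]])
    then show "\<psi> \<in> psi_bal k ` cube k" using perm_inv[OF p] by simp
  qed
  then show ?thesis using pmf_P[OF k] by simp
qed

lemma SYM_thm:
  assumes k: "k \<ge> 3"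
  shows "SYM (P_kBAL k) k"
  unfolding SYM_def set_P
proof (intro conjI allI impI ballI)
  fix i \<omega> \<psi> assume i: "i < k" and "\<psi> \<in> psi_bal k ` cube k"
  then obtain \<tau> where t: "\<tau> \<in> cube k" "\<psi> = psi_bal k \<tau>" by auto
  show "(\<Sum>\<tau>\<in>cube k. (if \<tau> ! i = \<omega> then 1 else 0) * \<psi> \<tau>) = 2 ^ (k - 1) * xi (P_kBAL k) k"
    unfolding t(2) by (rule sym1[OF k i]) (use t(1) in \<open>simp add: cube_def\<close>)
next
  fix \<theta> :: "nat \<Rightarrow> nat" and \<psi> assume "\<theta> permutes {..<k}"
  then show "pmf (P_kBAL k) \<psi> = pmf (P_kBAL k) (perm_fun k \<theta> \<psi>)" by (rule sym2[OF k])
qed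

lemma gen2:
  "(\<Sum>\<sigma>\<in>cube k. \<Sum>\<tau>\<in>cube k. (\<Prod>j<k. u j (\<sigma>!j)) * (\<Prod>j<k. v j (\<tau>!j)) * (\<Prod>j<k. \<rho> (\<sigma>!j, \<tau>!j)))
   = (\<Prod>j<k. u j True * v j True * \<rho> (True,True) + u j True * v j False * \<rho> (True,False)
           + u j False * v j True * \<rho> (False,True) + u j False * v j False * \<rho> (False,False) :: real)"
  using sum_cube_prod2[where k=k and f="\<lambda>j b b'. u j b * v j b' * \<rho> (b,b')"]
  by (simp add: prod.distrib)

definition rhoa :: "real \<Rightarrow> bool \<times> bool \<Rightarrow> real" where
  "rhoa a = (\<lambda>(x,y). if x = y then a else 1/2 - a)"

definition PhiA :: "nat \<Rightarrow> real \<Rightarrow> real" where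
  "PhiA k a = (a * (1 - lam k)^2 + lam k) ^ k - 2 * (lam k * (1/2 - a) + a) ^ k + a ^ k"

lemma per_tau:
  assumes t: "length \<tau>0 = k"
  shows "(\<Sum>\<sigma>\<in>cube k. \<Sum>\<tau>\<in>cube k. psi_bal k \<tau>0 \<sigma> * psi_bal k \<tau>0 \<tau> * (\<Prod>j<k. rhoa a (\<sigma>!j, \<tau>!j))) = PhiA k a"
proof -
  define l where "l = lam k"
  define g where "g = (\<lambda>j b. if b = \<tau>0!j then l else 1)"
  define h where "h = (\<lambda>j b. if b = (\<not> \<tau>0!j) then 1 else (0::real))"
  have ps: "psi_bal k \<tau>0 \<sigma> = (\<Prod>j<k. g j (\<sigma>!j)) - (\<Prod>j<k. h j (\<sigma>!j))" if "\<sigma> \<in> cube k" for \<sigma>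
  proof -
    have len: "length \<sigma> = k" using that by (simp add: cube_def)
    show ?thesis unfolding psi_prod[OF len] g_def h_def l_def by simp
  qed
  define W where "W = (\<lambda>\<sigma> \<tau>. (\<Prod>j<k. rhoa a (\<sigma>!j, \<tau>!j)))"
  define S where "S = (\<lambda>u v. (\<Sum>\<sigma>\<in>cube k. \<Sum>\<tau>\<in>cube k. (\<Prod>j<k. u j (\<sigma>!j)) * (\<Prod>j<k. v j (\<tau>!j)) * W \<sigma> \<tau>))"
  have "(\<Sum>\<sigma>\<in>cube k. \<Sum>\<tau>\<in>cube k. psi_bal k \<tau>0 \<sigma> * psi_bal k \<tau>0 \<tau> * W \<sigma> \<tau>)
      = (\<Sum>\<sigma>\<in>cube k. \<Sum>\<tau>\<in>cube k. (\<Prod>j<k. g j (\<sigma>!j)) * (\<Prod>j<k. g j (\<tau>!j)) * W \<sigma> \<tau>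
          - (\<Prod>j<k. g j (\<sigma>!j)) * (\<Prod>j<k. h j (\<tau>!j)) * W \<sigma> \<tau>
          - (\<Prod>j<k. h j (\<sigma>!j)) * (\<Prod>j<k. g j (\<tau>!j)) * W \<sigma> \<tau>
          + (\<Prod>j<k. h j (\<sigma>!j)) * (\<Prod>j<k. h j (\<tau>!j)) * W \<sigma> \<tau>)"
    by (intro sum.cong refl) (simp add: ps algebra_simps)
  also have "\<dots> = S g g - S g h - S h g + S h h"
    unfolding S_def by (simp add: sum.distrib sum_subtractf)
  also have "S g g = (a * (1 - l)^2 + l) ^ k"
    unfolding S_def W_def gen2 by (subst prod.cong[OF refl, where h="\<lambda>_. a * (1 - l)^2 + l"])
      (auto simp: g_def rhoa_def power2_eq_square algebra_simps)
  also have "S g h = (l * (1/2 - a) + a) ^ k"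
    unfolding S_def W_def gen2 by (subst prod.cong[OF refl, where h="\<lambda>_. l * (1/2 - a) + a"])
      (auto simp: g_def h_def rhoa_def algebra_simps)
  also have "S h g = (l * (1/2 - a) + a) ^ k"
    unfolding S_def W_def gen2 by (subst prod.cong[OF refl, where h="\<lambda>_. l * (1/2 - a) + a"])
      (auto simp: g_def h_def rhoa_def algebra_simps)
  also have "S h h = a ^ k"
    unfolding S_def W_def gen2 by (subst prod.cong[OF refl, where h="\<lambda>_. a"])
      (auto simp: h_def rhoa_def algebra_simps)
  finally show ?thesis unfolding W_def PhiA_def l_def by simp
qed

lemma expect2:
  "measure_pmf.expectation (P_kBAL k) (\<lambda>\<psi>. \<psi> \<sigma> * \<psi> \<tau>)
    = (\<Sum>\<tau>0\<in>cube k. psi_bal k \<tau>0 \<sigma> * psi_bal k \<tau>0 \<tau>) / 2 ^ k"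
  unfolding P_kBAL_def using finite_cube cube_ne card_cube by (simp add: integral_pmf_of_set)

lemma phi_MIN_eq: "phi_MIN (P_kBAL k) k (rhoa a) = PhiA k a"
proof -
  define F where "F = (\<lambda>\<tau>0 \<sigma> \<tau>. psi_bal k \<tau>0 \<sigma> * psi_bal k \<tau>0 \<tau>)"
  define W where "W = (\<lambda>\<sigma> \<tau>. (\<Prod>j<k. rhoa a (\<sigma>!j, \<tau>!j)))"
  have "phi_MIN (P_kBAL k) k (rhoa a) = (\<Sum>\<sigma>\<in>cube k. \<Sum>\<tau>\<in>cube k. (\<Sum>\<tau>0\<in>cube k. F \<tau>0 \<sigma> \<tau>) / 2^k * W \<sigma> \<tau>)"
    unfolding phi_MIN_def expect2 F_def W_def ..
  also have "\<dots> = (\<Sum>\<sigma>\<in>cube k. \<Sum>\<tau>\<in>cube k. \<Sum>\<tau>0\<in>cube k. F \<tau>0 \<sigma> \<tau> * W \<sigma> \<tau> / 2^k)"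
    by (simp add: sum_divide_distrib sum_distrib_right)
  also have "\<dots> = (\<Sum>\<sigma>\<in>cube k. \<Sum>\<tau>0\<in>cube k. \<Sum>\<tau>\<in>cube k. F \<tau>0 \<sigma> \<tau> * W \<sigma> \<tau> / 2^k)"
    by (rule sum.cong[OF refl], rule sum.swap)
  also have "\<dots> = (\<Sum>\<tau>0\<in>cube k. \<Sum>\<sigma>\<in>cube k. \<Sum>\<tau>\<in>cube k. F \<tau>0 \<sigma> \<tau> * W \<sigma> \<tau> / 2^k)"
    by (rule sum.swap)
  also have "\<dots> = (\<Sum>\<tau>0\<in>cube k. PhiA k a / 2^k)"
  proof (rule sum.cong[OF refl])
    fix \<tau>0 assume "\<tau>0 \<in> cube k"
    then have "length \<tau>0 = k" by (simp add: cube_def)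
    from per_tau[OF this, of a] show "(\<Sum>\<sigma>\<in>cube k. \<Sum>\<tau>\<in>cube k. F \<tau>0 \<sigma> \<tau> * W \<sigma> \<tau> / 2^k) = PhiA k a / 2^k"
      unfolding F_def W_def by (simp add: sum_divide_distrib[symmetric])
  qed
  also have "\<dots> = PhiA k a" using card_cube[of k] by simp
  finally show ?thesis .
qed

primrec Rf :: "nat \<Rightarrow> real \<Rightarrow> real" where
  "Rf 0 z = 0"
| "Rf (Suc n) z = real n + (1 + z) * Rf n z"

lemma Rf_id: "(1 + z) ^ n = 1 + real n * z + z^2 * Rf n z"
  by (induction n) (simp_all add: algebra_simps power2_eq_square)

lemma Rf_nonneg: "z \<ge> -1 \<Longrightarrow> Rf n z \<ge> 0"
  by (induction n) auto

lemma Rf_mono: "-1 \<le> z \<Longrightarrow> z \<le> z' \<Longrightarrow> Rf n z \<le> Rf n z'"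
proof (induction n)
  case 0 then show ?case by simp
next
  case (Suc n)
  have "(1 + z) * Rf n z \<le> (1 + z') * Rf n z'"
    using Suc by (intro mult_mono) (auto intro: Rf_nonneg)
  then show ?case by simp
qed

lemma Rf_ge: "z \<ge> -1 \<Longrightarrow> Rf (Suc n) z \<ge> real n"
  using Rf_nonneg[of z n] by simp

lemma Rf_0: "Rf n 0 = real n * (real n - 1) / 2"
  by (induction n) (simp_all add: algebra_simps)

lemma key_ineq:
  assumes k: "k \<ge> 3" and r: "0 < r" "r * real k \<le> 1" and x: "-1 \<le> x" "x \<le> 1" "x \<noteq> 0"
  shows "r^2 * Rf k (r^2 * x) - 2 * r * Rf k (r * x) + Rf k x > 0"
proof -
  obtain n where kn: "k = Suc n" using k by (cases k) auto
  have "r * 3 \<le> r * real k" using k r by (intro mult_left_mono) auto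
  then have r1: "r \<le> 1/3" using r by linarith
  have n2: "real n \<ge> 2" using k kn by simp
  have R0: "Rf k 0 = real k * (real k - 1) / 2" by (rule Rf_0)
  show ?thesis
  proof (cases "x < 0")
    case True
    have "r * (-1) \<le> r * x" using x r by (intro mult_left_mono) auto
    then have a1: "-1 \<le> r * x" using r1 by linarith
    have a2: "r * x \<le> 0" using True r by (simp add: mult_nonneg_nonpos)
    have "r^2 * (-1) \<le> r^2 * x" using x r by (intro mult_left_mono) auto
    moreover have "r^2 \<le> r * 1" unfolding power2_eq_square using r r1 by (intro mult_left_mono) auto
    ultimately have a3: "-1 \<le> r^2 * x" using r1 by linarith
    have b1: "Rf k x \<ge> real n" using Rf_ge[OF x(1)] kn by simp
    have b2: "Rf k (r*x) \<le> real k * (real k - 1) / 2" using Rf_mono[OF a1 a2, of k] R0 by linarith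
    have b3: "Rf k (r^2*x) \<ge> real n" using Rf_ge[OF a3] kn by simp
    have "r^2 * Rf k (r^2 * x) \<ge> r^2 * real n" using b3 by (simp add: mult_left_mono)
    moreover have "2 * r * Rf k (r * x) \<le> 2 * r * (real k * (real k - 1) / 2)"
      using b2 r by (simp add: mult_left_mono)
    moreover have "r * (real k * (real k - 1)) \<le> real k - 1"
    proof -
      have "(r * real k) * (real k - 1) \<le> 1 * (real k - 1)" using r k by (intro mult_right_mono) auto
      then show ?thesis by (simp add: mult.assoc)
    qed
    moreover have "r^2 * real n > 0" using r n2 by simp
    ultimately show ?thesis using b1 kn by simp
  next
    case False
    then have xp: "x > 0" using x by simp
    have c1: "r^2 * x \<le> r * x" using r r1 xp
      by (simp add: power2_eq_square mult_right_mono)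
    have c2: "r * x \<le> x" using r1 xp by (simp add: mult_left_le_one_le)
    have c0: "0 \<le> r^2 * x" using xp by simp
    have rx0: "0 \<le> r*x" using r xp by simp
    have d1: "Rf k (r*x) \<le> Rf k x" by (rule Rf_mono[OF _ c2]) (use rx0 in linarith)
    have d2: "Rf k 0 \<le> Rf k (r*x)" by (rule Rf_mono[OF _ rx0]) simp
    have d3: "0 \<le> Rf k (r^2*x)" using Rf_nonneg c0 by simp
    have "real k * (real k - 1) \<ge> 3 * 2" using k by (intro mult_mono) auto
    then have "Rf k 0 > 0" using R0 by linarith
    then have "(1 - 2*r) * Rf k (r*x) > 0" using d2 r1 by simp
    moreover have "r^2 * Rf k (r^2 * x) \<ge> 0" using d3 by simp
    ultimately show ?thesis using d1 by (simp add: algebra_simps)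
  qed
qed



lemma G_id:
  assumes qr: "q * r = 1"
  shows "q^2 * (1 + r^2 * x)^k - 2 * q * (1 + r * x)^k + (1 + x)^k
       = q^2 - 2*q + 1 + x^2 * (r^2 * Rf k (r^2 * x) - 2 * r * Rf k (r * x) + Rf k x)"
proof -
  have "q^2 * (1 + r^2 * x)^k - 2 * q * (1 + r * x)^k + (1 + x)^k
     = q^2 * (1 + real k * (r^2*x) + (r^2*x)^2 * Rf k (r^2 * x)) - 2 * q * (1 + real k * (r*x) + (r*x)^2 * Rf k (r * x))
       + (1 + real k * x + x^2 * Rf k x)"
    by (simp only: Rf_id)
  also have "\<dots> = q^2 - 2*q + 1 + x^2 * (r^2 * Rf k (r^2 * x) - 2 * r * Rf k (r * x) + Rf k x)"
    using qr by algebra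
  finally show ?thesis .
qed

lemma PhiA_form:
  assumes k: "k \<ge> 3"
  defines "p \<equiv> 1 + lam k" and "s \<equiv> 1 - lam k"
  shows "PhiA k a = ((p^k)^2 * (1 + (s/p)^2 * (4*a-1))^k - 2 * p^k * (1 + (s/p) * (4*a-1))^k + (1 + (4*a-1))^k) / 4^k"
proof -
  have l: "0 < lam k" "lam k < 1" using lam_props[OF k] by auto
  have p0: "p > 0" unfolding p_def using l by simp
  define r where "r = s / p"
  define x where "x = 4*a - 1"
  have pr: "p^2 * r^2 = s^2" "p * r = s" unfolding r_def using p0 by (simp_all add: field_simps)
  have "p^2 * (1 + r^2 * x) / 4 = (p^2 + s^2 * x) / 4" using pr by (simp add: algebra_simps)
  also have "\<dots> = a * (1 - lam k)^2 + lam k" unfolding p_def s_def x_def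
    by (simp add: power2_eq_square field_simps)
  finally have e1: "a * (1 - lam k)^2 + lam k = p^2 * (1 + r^2 * x) / 4" ..
  have "p * (1 + r * x) / 4 = (p + s * x) / 4" using pr by (simp add: algebra_simps)
  also have "\<dots> = lam k * (1/2 - a) + a" unfolding p_def s_def x_def
    by (simp add: field_simps)
  finally have e2: "lam k * (1/2 - a) + a = p * (1 + r * x) / 4" ..
  have e3: "a = (1 + x) / 4" unfolding x_def by simp
  have "PhiA k a = (p^2 * (1 + r^2 * x) / 4)^k - 2 * (p * (1 + r * x) / 4)^k + ((1 + x) / 4)^k"
    unfolding PhiA_def e1 e2 by (subst e3) simp
  also have "\<dots> = ((p^k)^2 * (1 + r^2 * x)^k - 2 * p^k * (1 + r * x)^k + (1 + x)^k) / 4^k"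
    by (simp add: power_divide power_mult_distrib diff_divide_distrib
        flip: power_mult) (simp add: add_divide_distrib diff_divide_distrib mult.assoc mult.commute)
  finally show ?thesis unfolding r_def x_def .
qed



lemma PhiA_gt:
  assumes k: "k \<ge> 3" and a: "0 \<le> a" "a \<le> 1/2" "a \<noteq> 1/4"
  shows "PhiA k (1/4) < PhiA k a"
proof -
  have L: "0 < lam k" "lam k < 1" "(1 - lam k) * (1 + lam k) ^ (k - 1) = 1"
    "(real k - 1) / (real k + 1) < lam k" using lam_props[OF k] by auto
  define p where "p = 1 + lam k"
  define s where "s = 1 - lam k"
  define r where "r = s / p"
  define q where "q = p ^ k"
  have p0: "p > 0" unfolding p_def using L by simp
  have s0: "s > 0" unfolding s_def using L by simp
  have "p ^ k = p * p ^ (k - 1)" using k by (cases k) auto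
  then have "q * r = (p * p^(k-1)) * s / p" unfolding q_def r_def by simp
  also have "\<dots> = s * p^(k-1)" using p0 by simp
  also have "\<dots> = 1" using L(3) unfolding s_def p_def .
  finally have qr: "q * r = 1" .
  have r0: "r > 0" unfolding r_def using p0 s0 by simp
  have "real k - 1 < lam k * (real k + 1)" using L(4) by (simp add: field_simps)
  then have "s * real k \<le> p" unfolding s_def p_def by (simp add: algebra_simps)
  then have rk: "r * real k \<le> 1" unfolding r_def using p0 by (simp add: field_simps)
  define x where "x = 4 * a - 1"
  have x: "-1 \<le> x" "x \<le> 1" "x \<noteq> 0" unfolding x_def using a by auto
  have F1: "PhiA k a = (q^2 - 2*q + 1 + x^2 * (r^2 * Rf k (r^2 * x) - 2 * r * Rf k (r * x) + Rf k x)) / 4^k"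
    using PhiA_form[OF k, of a] G_id[OF qr, of x k] unfolding q_def r_def x_def p_def s_def by simp
  have F0: "PhiA k (1/4) = (q^2 - 2*q + 1) / 4^k"
    using PhiA_form[OF k, of "1/4"] unfolding q_def r_def x_def p_def s_def by simp
  have "x^2 * (r^2 * Rf k (r^2 * x) - 2 * r * Rf k (r * x) + Rf k x) > 0"
    using key_ineq[OF k r0 rk x] x(3) by simp
  then show ?thesis unfolding F1 F0 by (simp add: divide_strict_right_mono)
qed

lemma rhoa_quarter: "rhoa (1/4) = (\<lambda>_. 1/4)"
  by (auto simp: rhoa_def)

lemma UNIV_bb: "(UNIV :: (bool \<times> bool) set) = {(True,True),(True,False),(False,True),(False,False)}"
  by auto

lemma MIN_thm:
  assumes k: "k \<ge> 3"
  shows "MIN_prop (P_kBAL k) k"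
  unfolding MIN_prop_def
proof (intro conjI allI impI)
  show "uniform_marginals (\<lambda>_. 1/4)"
    unfolding uniform_marginals_def is_distr_def UNIV_bb by (simp add: UNIV_bool)
next
  fix \<rho> :: "bool \<times> bool \<Rightarrow> real"
  assume h: "uniform_marginals \<rho> \<and> \<rho> \<noteq> (\<lambda>_. 1/4)"
  define a where "a = \<rho> (True, True)"
  have m: "\<rho> (True,True) + \<rho> (True,False) = 1/2" "\<rho> (False,True) + \<rho> (False,False) = 1/2"
     "\<rho> (True,True) + \<rho> (False,True) = 1/2" "\<rho> (True,False) + \<rho> (False,False) = 1/2"
    using h unfolding uniform_marginals_def by (auto simp: UNIV_bool add.commute)
  have nn: "\<rho> (True,True) \<ge> 0" "\<rho> (True,False) \<ge> 0"
    using h unfolding uniform_marginals_def is_distr_def by auto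
  have rr: "\<rho> = rhoa a"
  proof
    fix z :: "bool \<times> bool" show "\<rho> z = rhoa a z"
    proof -
      obtain x y where z: "z = (x, y)" by (cases z)
      have v: "\<rho> (True,False) = 1/2 - a" "\<rho> (False,True) = 1/2 - a" "\<rho> (False,False) = a"
        using m unfolding a_def by linarith+
      show ?thesis unfolding z by (cases x rule: bool.exhaust; cases y rule: bool.exhaust) (simp_all add: v rhoa_def a_def)
    qed
  qed
  have a: "0 \<le> a" "a \<le> 1/2" using nn m unfolding a_def by auto
  have "a \<noteq> 1/4"
  proof
    assume a14: "a = 1/4" have "\<rho> = (\<lambda>_. 1/4)" unfolding rr a14 rhoa_quarter ..
    then show False using h by simp
  qed
  then show "phi_MIN (P_kBAL k) k (\<lambda>_. 1 / 4) < phi_MIN (P_kBAL k) k \<rho>"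
    unfolding rr rhoa_quarter[symmetric] phi_MIN_eq using PhiA_gt[OF k a] by simp
qed

definition gpath :: "'v set set \<Rightarrow> 'v list \<Rightarrow> bool" where
  "gpath E xs \<longleftrightarrow> (\<forall>i. Suc i < length xs \<longrightarrow> {xs!i, xs!Suc i} \<in> E)"

definition cyc :: "'v list \<Rightarrow> 'v set set" where
  "cyc xs = (\<lambda>j. {xs!j, xs!(Suc j mod length xs)}) ` {..<length xs}"

lemma mod_pred:
  fixes n j :: nat
  assumes "j < n"
  shows "(Suc j mod n + n - 1) mod n = j"
proof -
  have "(Suc j mod n + (n - 1)) mod n = (Suc j + (n - 1)) mod n" by (simp add: mod_add_left_eq)
  also have "Suc j + (n - 1) = j + n" using assms by simp
  also have "(j + n) mod n = j" using assms by simp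
  finally show ?thesis using assms by simp
qed

lemma Suc_mod_pred:
  fixes n i :: nat
  assumes "i < n"
  shows "Suc ((i + n - 1) mod n) mod n = i"
proof -
  have "Suc ((i + n - 1) mod n) mod n = Suc (i + n - 1) mod n" by (simp add: mod_Suc_eq)
  also have "Suc (i + n - 1) = i + n" using assms by simp
  finally show ?thesis using assms by simp
qed

lemma cyc_is_cycle:
  assumes d: "distinct xs" and l: "length xs \<ge> 3" and p: "gpath E xs"
    and cl: "{last xs, hd xs} \<in> E"
  shows "is_cycle E (cyc xs)"
proof -
  define n where "n = length xs"
  define Ed where "Ed = (\<lambda>j. {xs!j, xs!(Suc j mod n)})"
  have C: "cyc xs = Ed ` {..<n}" unfolding cyc_def Ed_def n_def ..
  have n3: "n \<ge> 3" using l unfolding n_def .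
  have nth_inj: "xs!i = xs!j \<longleftrightarrow> i = j" if "i < n" "j < n" for i j
    using nth_eq_iff_index_eq[OF d] that unfolding n_def by simp
  have sm: "Suc j mod n < n" for j using n3 by simp
  have sub: "cyc xs \<subseteq> E"
  proof
    fix e assume "e \<in> cyc xs"
    then obtain j where j: "j < n" "e = Ed j" unfolding C by auto
    show "e \<in> E"
    proof (cases "Suc j < n")
      case True
      then show ?thesis using p j unfolding gpath_def Ed_def n_def by simp
    next
      case False
      then have sj: "Suc j = n" using j by simp
      then have "j = n - 1" "Suc j mod n = 0" by auto
      moreover have "last xs = xs ! (n-1)" "hd xs = xs ! 0"
      proof -
        have "xs \<noteq> []" using n3 unfolding n_def by auto
        then show "last xs = xs ! (n-1)" "hd xs = xs ! 0" unfolding n_def by (simp_all add: last_conv_nth hd_conv_nth)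
      qed
      ultimately show ?thesis using cl j unfolding Ed_def by (simp add: insert_commute)
    qed
  qed
  have "0 \<in> {..<n}" using n3 by simp
  then have ne: "cyc xs \<noteq> {}" unfolding C by blast
  have U: "\<Union>(cyc xs) = set xs"
  proof
    show "\<Union>(cyc xs) \<subseteq> set xs" unfolding C Ed_def n_def using n3 sm unfolding n_def
      by (auto simp: nth_mem)
    show "set xs \<subseteq> \<Union>(cyc xs)"
    proof
      fix v assume "v \<in> set xs"
      then obtain i where "i < n" "v = xs!i" unfolding n_def by (auto simp: in_set_conv_nth)
      then show "v \<in> \<Union>(cyc xs)" unfolding C Ed_def by auto
    qed
  qed
  have deg: "card {e \<in> cyc xs. v \<in> e} = 2" if "v \<in> \<Union>(cyc xs)" for v
  proof -
    from that obtain i where i: "i < n" "v = xs!i" unfolding U n_def by (auto simp: in_set_conv_nth)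
    define pr where "pr = (i + n - 1) mod n"
    have pr: "pr < n" "Suc pr mod n = i" unfolding pr_def using i n3 Suc_mod_pred by auto
    have "{e \<in> cyc xs. v \<in> e} = {Ed i, Ed pr}"
    proof (intro equalityI subsetI)
      fix e assume "e \<in> {e \<in> cyc xs. v \<in> e}"
      then obtain j where j: "j < n" "e = Ed j" "v \<in> Ed j" unfolding C by auto
      then have "xs!i = xs!j \<or> xs!i = xs!(Suc j mod n)" using i unfolding Ed_def by auto
      then have "i = j \<or> i = Suc j mod n" using nth_inj i j sm by auto
      then show "e \<in> {Ed i, Ed pr}"
      proof
        assume "i = Suc j mod n"
        then have "pr = j" unfolding pr_def using mod_pred[OF j(1)] by simp
        then show ?thesis using j by simp
      qed (use j in simp)
    next
      fix e assume "e \<in> {Ed i, Ed pr}"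
      then show "e \<in> {e \<in> cyc xs. v \<in> e}" unfolding C using i pr unfolding Ed_def by auto
    qed
    moreover have "Ed i \<noteq> Ed pr"
    proof
      assume eq: "Ed i = Ed pr"
      have si: "Suc i mod n \<noteq> i"
      proof
        assume "Suc i mod n = i"
        then have "Suc i mod n = i mod n" using i by simp
        then have "n dvd Suc i - i" by (subst mod_eq_dvd_iff_nat[symmetric]) auto
        then show False using n3 by simp
      qed
      have "xs!(Suc i mod n) \<noteq> xs!i" using nth_inj[OF sm i(1)] si by simp
      with eq have "xs!(Suc i mod n) = xs!pr" unfolding Ed_def using pr by (auto simp: doubleton_eq_iff)
      then have "Suc i mod n = pr" using nth_inj[OF sm pr(1)] by simp
      moreover have "Suc (Suc i) mod n = Suc (Suc i mod n) mod n" by (simp add: mod_Suc_eq)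
      ultimately have "Suc (Suc i) mod n = i mod n" using pr i by simp
      then have "n dvd Suc (Suc i) - i" by (subst mod_eq_dvd_iff_nat[symmetric]) auto
      then have "n dvd 2" by simp
      then show False using n3 by (auto dest: dvd_imp_le)
    qed
    ultimately show ?thesis by simp
  qed
  define R where "R = {(x, y). {x, y} \<in> cyc xs}"
  have symR: "sym (R\<^sup>*)" by (rule sym_rtrancl) (auto simp: R_def sym_def insert_commute)
  have reach: "(xs!0, xs!i) \<in> R\<^sup>*" if "i < n" for i
    using that
  proof (induction i)
    case 0 then show ?case by simp
  next
    case (Suc i)
    have "Ed i \<in> cyc xs" unfolding C using Suc by simp
    moreover have "Suc i mod n = Suc i" using Suc by simp
    ultimately have "(xs!i, xs!Suc i) \<in> R" unfolding R_def Ed_def by simp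
    with Suc show ?case by (meson Suc_lessD rtrancl.rtrancl_into_rtrancl)
  qed
  have conn: "connected_graph (\<Union>(cyc xs)) (cyc xs)"
    unfolding connected_graph_def
  proof (intro ballI)
    fix u v assume "u \<in> \<Union>(cyc xs)" "v \<in> \<Union>(cyc xs)"
    then obtain i j where ij: "i < n" "j < n" "u = xs!i" "v = xs!j" unfolding U n_def by (auto simp: in_set_conv_nth)
    have "(u, xs!0) \<in> R\<^sup>*" using reach[OF ij(1)] symR ij unfolding sym_def by blast
    moreover have "(xs!0, v) \<in> R\<^sup>*" using reach[OF ij(2)] ij by simp
    ultimately show "(u, v) \<in> {(x, y). {x, y} \<in> cyc xs}\<^sup>*" unfolding R_def by (rule rtrancl_trans)
  qed
  show ?thesis unfolding is_cycle_def using sub ne deg conn by blast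
qed

lemma gpath_snoc: "gpath E q \<Longrightarrow> q \<noteq> [] \<Longrightarrow> {last q, w} \<in> E \<Longrightarrow> gpath E (q @ [w])"
  unfolding gpath_def
proof (intro allI impI)
  fix i assume p: "\<forall>i. Suc i < length q \<longrightarrow> {q ! i, q ! Suc i} \<in> E" and ne: "q \<noteq> []"
    and l: "{last q, w} \<in> E" and i: "Suc i < length (q @ [w])"
  show "{(q @ [w]) ! i, (q @ [w]) ! Suc i} \<in> E"
  proof (cases "Suc i < length q")
    case True then show ?thesis using p by (simp add: nth_append)
  next
    case False
    then have "Suc i = length q" using i by simp
    then have "i = length q - 1" by simp
    then show ?thesis using l ne \<open>Suc i = length q\<close> by (simp add: nth_append last_conv_nth)
  qed
qed

lemma gpath_drop: "gpath E q \<Longrightarrow> gpath E (drop j q)"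
  unfolding gpath_def by auto

lemma gpath_mono: "gpath E q \<Longrightarrow> E \<subseteq> E' \<Longrightarrow> gpath E' q"
  unfolding gpath_def by auto

lemma extend:
  fixes E :: "'v set set"
  assumes fin: "finite E" and fe: "\<And>e. e \<in> E \<Longrightarrow> finite e"
    and deg: "\<And>v u. v \<noteq> y \<Longrightarrow> {v,u} \<in> E \<Longrightarrow> u \<noteq> v \<Longrightarrow> \<exists>w. w \<noteq> u \<and> w \<noteq> v \<and> {v,w} \<in> E"
    and p: "distinct p" "length p \<ge> 2" "gpath E p" "y \<notin> set p"
  shows "(\<exists>c. distinct c \<and> length c \<ge> 3 \<and> gpath E c \<and> {last c, hd c} \<in> E)
       \<or> (\<exists>c. distinct c \<and> length c \<ge> 3 \<and> gpath E c \<and> c!0 = p!0 \<and> c!1 = p!1 \<and> last c = y)"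
proof -
  define V where "V = \<Union>E \<union> set p"
  have finV: "finite V" unfolding V_def using fin fe by auto
  define S where "S = {q. distinct q \<and> gpath E q \<and> (\<exists>r. q = p @ r) \<and> y \<notin> set q}"
  have Sv: "set q \<subseteq> V" if "q \<in> S" for q
  proof
    fix v assume v: "v \<in> set q"
    from that obtain r where q: "q = p @ r" "gpath E q" unfolding S_def by auto
    show "v \<in> V"
    proof (cases "v \<in> set p")
      case True then show ?thesis unfolding V_def by simp
    next
      case False
      obtain i where i0: "i < length q" "q!i = v" using v by (auto simp: in_set_conv_nth)
      have "i \<ge> length p"
      proof (rule ccontr)
        assume "\<not> i \<ge> length p"
        then have "q!i = p!i" "i < length p" using q(1) by (auto simp: nth_append)
        then show False using False i0 by auto
      qed
      with i0 have i: "i < length q" "q!i = v" "i \<ge> length p" by auto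
      have si: "Suc (i-1) = i" using i p(2) by simp
      have "{q!(i-1), q!Suc (i-1)} \<in> E" using q(2) i si unfolding gpath_def by (metis)
      then show ?thesis using i si unfolding V_def by (metis UnCI UnionI insertCI)
    qed
  qed
  have Sl: "length q \<le> card V" if "q \<in> S" for q
    using distinct_card[of q] card_mono[OF finV Sv[OF that]] that unfolding S_def by simp
  have pS: "p \<in> S" unfolding S_def using p by auto
  obtain m where m: "\<exists>q\<in>S. length q = m" "\<forall>q\<in>S. length q \<le> m"
    using Nat.ex_has_greatest_nat[where P="\<lambda>m. \<exists>q\<in>S. length q = m" and k="length p" and b="card V"] pS Sl by blast
  then obtain q where q: "q \<in> S" "length q = m" by blast
  from q(1) obtain r where qd: "distinct q" "gpath E q" "q = p @ r" "y \<notin> set q" unfolding S_def by auto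
  define n where "n = length q"
  have n2: "n \<ge> 2" unfolding n_def using qd(3) p(2) by simp
  define z where "z = q!(n-1)"
  define z' where "z' = q!(n-2)"
  have s2: "Suc (n-2) < length q" "Suc (n-2) = n-1" using n2 unfolding n_def by auto
  have zz: "{z', z} \<in> E" using qd(2) s2 unfolding gpath_def z_def z'_def by metis
  have zne: "z' \<noteq> z" using qd(1) n2 unfolding z_def z'_def n_def by (simp add: nth_eq_iff_index_eq)
  have zy: "z \<noteq> y" using qd(4) n2 unfolding z_def n_def by auto
  obtain w where w: "w \<noteq> z'" "w \<noteq> z" "{z, w} \<in> E" using deg[OF zy _ zne] zz by (auto simp: insert_commute)
  have "q \<noteq> []" using n2 unfolding n_def by auto
  then have lastq: "last q = z" unfolding z_def n_def by (simp add: last_conv_nth)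
  have q01: "q!0 = p!0" "q!1 = p!1" using qd(3) p(2) by (auto simp: nth_append)
  show ?thesis
  proof (cases "w = y")
    case True
    have "distinct (q @ [y])" using qd by simp
    moreover have "gpath E (q @ [y])" by (rule gpath_snoc[OF qd(2)]) (use w True lastq \<open>q \<noteq> []\<close> in auto)
    moreover have "(q @ [y])!0 = p!0" "(q @ [y])!1 = p!1" using q01 n2 unfolding n_def by (auto simp: nth_append)
    ultimately show ?thesis using n2 unfolding n_def by (intro disjI2 exI[of _ "q @ [y]"]) auto
  next
    case False
    show ?thesis
    proof (cases "w \<in> set q")
      case True
      then obtain j where j: "j < n" "q!j = w" unfolding n_def by (auto simp: in_set_conv_nth)
      have "j \<noteq> n-1" "j \<noteq> n-2" using j w unfolding z_def z'_def by auto
      then have jl: "j + 2 < n" using j n2 by linarith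
      define c where "c = drop j q"
      have "distinct c" "gpath E c" unfolding c_def using qd(1) gpath_drop[OF qd(2)] by auto
      moreover have "length c \<ge> 3" unfolding c_def using jl unfolding n_def by simp
      moreover have "last c = z" "hd c = w" unfolding c_def using jl j lastq unfolding n_def
        by (auto simp: hd_drop_conv_nth)
      ultimately show ?thesis using w(3) by (intro disjI1 exI[of _ c]) auto
    next
      case wq: False
      have "gpath E (q @ [w])" by (rule gpath_snoc[OF qd(2)]) (use w lastq \<open>q \<noteq> []\<close> in auto)
      then have "q @ [w] \<in> S" unfolding S_def using qd wq False by auto
      then have "length (q @ [w]) \<le> m" using m by blast
      then show ?thesis using q by simp
    qed
  qed
qed

lemma is_cycle_mono: "is_cycle E' C \<Longrightarrow> E' \<subseteq> E \<Longrightarrow> is_cycle E C"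
  unfolding is_cycle_def by auto

lemma is_cycle_sub: "is_cycle E C \<Longrightarrow> C \<subseteq> E"
  unfolding is_cycle_def by auto

lemma two_cycles:
  fixes E :: "'v set set"
  assumes inf: "infinite (UNIV::'v set)"
    and fin: "finite E"
    and two: "\<And>e. e \<in> E \<Longrightarrow> \<exists>u v. u \<noteq> v \<and> e = {u,v}"
    and deg2: "\<And>v u. {v,u} \<in> E \<Longrightarrow> u \<noteq> v \<Longrightarrow> \<exists>w. w \<noteq> u \<and> w \<noteq> v \<and> {v,w} \<in> E"
    and deg3: "\<And>e. e \<in> E \<Longrightarrow> \<exists>a\<in>e. \<exists>x1 x2 x3. x1 \<noteq> x2 \<and> x1 \<noteq> x3 \<and> x2 \<noteq> x3 \<and> x1 \<noteq> a \<and> x2 \<noteq> a \<and> x3 \<noteq> a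
                 \<and> {a,x1} \<in> E \<and> {a,x2} \<in> E \<and> {a,x3} \<in> E"
    and ne: "E \<noteq> {}"
  shows "\<exists>C1 C2. is_cycle E C1 \<and> is_cycle E C2 \<and> C1 \<noteq> C2"
proof -
  have fe: "finite e" if "e \<in> E" for e using two[OF that] by auto
  have other: "\<exists>y. y \<noteq> a \<and> e = {a, y}" if "e \<in> E" "a \<in> e" for e a
    using two[OF that(1)] that(2) by (auto simp: insert_commute)
  obtain e0 where e0: "e0 \<in> E" using ne by auto
  obtain u0 v0 where uv: "u0 \<noteq> v0" "e0 = {u0, v0}" using two[OF e0] by auto
  have "finite (\<Union>E)" using fin fe by auto
  then obtain y0 where y0: "y0 \<notin> \<Union>E" using ex_new_if_finite[OF inf] by blast
  have y0p: "y0 \<notin> set [u0, v0]" using y0 e0 uv by auto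
  have "(\<exists>c. distinct c \<and> length c \<ge> 3 \<and> gpath E c \<and> {last c, hd c} \<in> E)
       \<or> (\<exists>c. distinct c \<and> length c \<ge> 3 \<and> gpath E c \<and> c!0 = [u0,v0]!0 \<and> c!1 = [u0,v0]!1 \<and> last c = y0)"
    by (rule extend[OF fin fe deg2 _ _ _ y0p]) (use uv e0 in \<open>auto simp: gpath_def\<close>)
  then obtain c1 where c1: "distinct c1" "length c1 \<ge> 3" "gpath E c1" "{last c1, hd c1} \<in> E"
  proof (elim disjE exE)
    fix c assume "distinct c \<and> length c \<ge> 3 \<and> gpath E c \<and> {last c, hd c} \<in> E"
    then show ?thesis using that by blast
  next
    fix c assume c: "distinct c \<and> length c \<ge> 3 \<and> gpath E c \<and> c!0 = [u0,v0]!0 \<and> c!1 = [u0,v0]!1 \<and> last c = y0"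
    define n where "n = length c"
    have "Suc (n-2) < length c" "Suc (n-2) = n - 1" using c unfolding n_def by auto
    then have "{c!(n-2), c!(n-1)} \<in> E" using c unfolding gpath_def by metis
    moreover have "c \<noteq> []" using c by auto
    then have "c!(n-1) = y0" using c unfolding n_def by (simp add: last_conv_nth)
    ultimately show ?thesis using y0 by auto
  qed
  define C1 where "C1 = cyc c1"
  have C1: "is_cycle E C1" unfolding C1_def by (rule cyc_is_cycle[OF c1])
  then obtain e1 where e1: "e1 \<in> C1" unfolding is_cycle_def by auto
  have e1E: "e1 \<in> E" using e1 C1 is_cycle_sub by auto
  obtain a x1 x2 x3 where ax: "a \<in> e1" "x1 \<noteq> x2" "x1 \<noteq> x3" "x2 \<noteq> x3" "x1 \<noteq> a" "x2 \<noteq> a" "x3 \<noteq> a"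
      "{a,x1} \<in> E" "{a,x2} \<in> E" "{a,x3} \<in> E"
    using deg3[OF e1E] by blast
  have "a \<in> \<Union>C1" using e1 ax by auto
  then have "card {e \<in> C1. a \<in> e} = 2" using C1 unfolding is_cycle_def by auto
  then obtain f1 f2 where f: "{e \<in> C1. a \<in> e} = {f1, f2}" "f1 \<noteq> f2" by (auto simp: card_2_iff)
  have f12: "f1 \<in> C1" "f2 \<in> C1" "a \<in> f1" "a \<in> f2" using f(1) by blast+
  have "f1 \<in> E" "f2 \<in> E" using f12 C1 is_cycle_sub by auto
  then obtain y1 y2 where y: "y1 \<noteq> a" "f1 = {a, y1}" "y2 \<noteq> a" "f2 = {a, y2}"
    using other[of f1 a] other[of f2 a] f12 by blast
  have inj2: "{a, s} = {a, t} \<Longrightarrow> s \<noteq> a \<Longrightarrow> t \<noteq> a \<Longrightarrow> s = t" for s t by (auto simp: doubleton_eq_iff)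
  obtain x where x: "x \<noteq> a" "{a, x} \<in> E" "{a, x} \<notin> C1"
  proof -
    have "\<not> ({a,x1} \<in> C1 \<and> {a,x2} \<in> C1 \<and> {a,x3} \<in> C1)"
    proof
      assume h: "{a,x1} \<in> C1 \<and> {a,x2} \<in> C1 \<and> {a,x3} \<in> C1"
      then have "{a,x1} \<in> {e \<in> C1. a \<in> e}" "{a,x2} \<in> {e \<in> C1. a \<in> e}" "{a,x3} \<in> {e \<in> C1. a \<in> e}"
        by simp_all
      then have m: "{a,x1} = f1 \<or> {a,x1} = f2" "{a,x2} = f1 \<or> {a,x2} = f2" "{a,x3} = f1 \<or> {a,x3} = f2"
        unfolding f(1) by simp_all
      have d: "{a,x1} \<noteq> {a,x2}" "{a,x1} \<noteq> {a,x3}" "{a,x2} \<noteq> {a,x3}"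
        using ax by (auto simp: doubleton_eq_iff)
      show False using m d by argo
    qed
    then consider "{a,x1} \<notin> C1" | "{a,x2} \<notin> C1" | "{a,x3} \<notin> C1" by blast
    then show ?thesis
    proof cases
      case 1 then show ?thesis using that ax by blast
    next
      case 2 then show ?thesis using that ax by blast
    next
      case 3 then show ?thesis using that ax by blast
    qed
  qed
  define E' where "E' = E - {f2}"
  have f1E': "{a, y1} \<in> E'" using y f f12 C1 is_cycle_sub unfolding E'_def by auto
  have xE': "{a, x} \<in> E'" using x f12 y unfolding E'_def by auto
  have xy1: "x \<noteq> y1" using x f12 y by auto
  have xy2: "x \<noteq> y2" using x f12 y by auto
  have finE': "finite E'" using fin unfolding E'_def by simp
  have feE': "finite e" if "e \<in> E'" for e using fe that unfolding E'_def by simp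
  have degE': "\<exists>w. w \<noteq> u \<and> w \<noteq> v \<and> {v,w} \<in> E'" if hv2: "v \<noteq> y2" and hvu: "{v,u} \<in> E'" and huv: "u \<noteq> v" for v u
  proof (cases "v = a")
    case True
    show ?thesis
    proof (cases "u = y1")
      case True then show ?thesis using xE' xy1 x \<open>v = a\<close> by (intro exI[of _ x]) auto
    next
      case False then show ?thesis using f1E' y \<open>v = a\<close> by (intro exI[of _ y1]) auto
    qed
  next
    case False
    have "{v,u} \<in> E" using hvu unfolding E'_def by simp
    then obtain w where w: "w \<noteq> u" "w \<noteq> v" "{v,w} \<in> E" using deg2 huv by blast
    have "{v,w} \<noteq> f2" using False hv2 y by (auto simp: doubleton_eq_iff)
    then show ?thesis using w unfolding E'_def by blast
  qed
  have y2p: "y2 \<notin> set [a, x]" using y xy2 by auto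
  have "(\<exists>c. distinct c \<and> length c \<ge> 3 \<and> gpath E' c \<and> {last c, hd c} \<in> E')
       \<or> (\<exists>c. distinct c \<and> length c \<ge> 3 \<and> gpath E' c \<and> c!0 = [a,x]!0 \<and> c!1 = [a,x]!1 \<and> last c = y2)"
    by (rule extend[OF finE' feE' degE' _ _ _ y2p]) (use x xE' in \<open>auto simp: gpath_def\<close>)
  then show ?thesis
  proof (elim disjE exE)
    fix c assume c: "distinct c \<and> length c \<ge> 3 \<and> gpath E' c \<and> {last c, hd c} \<in> E'"
    have C2: "is_cycle E' (cyc c)" using cyc_is_cycle c by blast
    have "f2 \<notin> cyc c" using is_cycle_sub[OF C2] unfolding E'_def by auto
    then have "C1 \<noteq> cyc c" using f12 by auto
    moreover have "is_cycle E (cyc c)" using is_cycle_mono[OF C2] unfolding E'_def by auto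
    ultimately show ?thesis using C1 by blast
  next
    fix c assume c: "distinct c \<and> length c \<ge> 3 \<and> gpath E' c \<and> c!0 = [a,x]!0 \<and> c!1 = [a,x]!1 \<and> last c = y2"
    have "c \<noteq> []" using c by auto
    then have "hd c = a" using c by (simp add: hd_conv_nth)
    then have cl: "{last c, hd c} \<in> E" using c y f12 C1 is_cycle_sub by (auto simp: insert_commute)
    have gp: "gpath E c" using c gpath_mono unfolding E'_def by blast
    have C2: "is_cycle E (cyc c)" using cyc_is_cycle[OF _ _ gp cl] c by blast
    have "Suc 0 mod length c = 1" using c by simp
    then have "{c!0, c!1} \<in> cyc c" unfolding cyc_def using c by (auto intro!: image_eqI[of _ _ 0])
    then have "{a, x} \<in> cyc c" using c by simp
    then have "C1 \<noteq> cyc c" using x by auto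
    then show ?thesis using C1 C2 by blast
  qed
qed

lemma fg_mem: "e \<in> fg_edges A dv \<longleftrightarrow> (\<exists>x a. e = {Inl x, Inr a} \<and> a \<in> A \<and> x \<in> set (dv a))"
  unfolding fg_edges_def by blast

lemma fg_memI: "a \<in> A \<Longrightarrow> x \<in> set (dv a) \<Longrightarrow> {Inr a, Inl x} \<in> fg_edges A dv"
  unfolding fg_edges_def by (auto simp: insert_commute)

lemma fg_memI': "a \<in> A \<Longrightarrow> x \<in> set (dv a) \<Longrightarrow> {Inl x, Inr a} \<in> fg_edges A dv"
  unfolding fg_edges_def by auto

lemma fg_eq: "fg_edges A dv = (\<Union>a\<in>A. (\<lambda>x. {Inl x, Inr a}) ` set (dv a))"
  unfolding fg_edges_def by blast

lemma fg_mono: "A' \<subseteq> A \<Longrightarrow> fg_edges A' dv \<subseteq> fg_edges A dv"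
  unfolding fg_edges_def by blast

lemma inf_sum: "infinite (UNIV :: (nat + nat) set)"
proof
  assume "finite (UNIV :: (nat + nat) set)"
  then have "finite (range (Inl :: nat \<Rightarrow> nat + nat))" by (rule finite_subset[rotated]) simp
  moreover have "inj (Inl :: nat \<Rightarrow> nat + nat)" by (simp add: inj_def)
  ultimately have "finite (UNIV :: nat set)" using finite_imageD by blast
  then show False by simp
qed

lemma no_private_two_cycles:
  assumes k: "k \<ge> 3" and fin: "finite A" and ne: "A \<noteq> {}"
    and dv: "\<forall>a\<in>A. length (dv a) = k \<and> distinct (dv a)"
    and np: "\<forall>a\<in>A. \<forall>x\<in>set (dv a). \<exists>b\<in>A. b \<noteq> a \<and> x \<in> set (dv b)"
  shows "\<exists>C1 C2. is_cycle (fg_edges A dv) C1 \<and> is_cycle (fg_edges A dv) C2 \<and> C1 \<noteq> C2"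
proof (rule two_cycles[OF inf_sum])
  show "finite (fg_edges A dv)" unfolding fg_eq using fin by auto
next
  fix e assume "e \<in> fg_edges A dv"
  then show "\<exists>u v. u \<noteq> v \<and> e = {u, v}" unfolding fg_mem by blast
next
  fix v u assume vu: "{v, u} \<in> fg_edges A dv" "u \<noteq> v"
  then obtain x a where xa: "{v,u} = {Inl x, Inr a}" "a \<in> A" "x \<in> set (dv a)" unfolding fg_mem by blast
  then consider "v = Inl x" "u = Inr a" | "v = Inr a" "u = Inl x" by (auto simp: doubleton_eq_iff)
  then show "\<exists>w. w \<noteq> u \<and> w \<noteq> v \<and> {v, w} \<in> fg_edges A dv"
  proof cases
    case 1
    obtain b where b: "b \<in> A" "b \<noteq> a" "x \<in> set (dv b)" using np xa by blast
    show ?thesis using 1 b xa(2) vu(2) by (intro exI[of _ "Inr b"]) (auto intro: fg_memI')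
  next
    case 2
    have l: "length (dv a) = k" "distinct (dv a)" using dv xa by auto
    have "dv a ! 0 \<noteq> dv a ! 1" using l k by (simp add: nth_eq_iff_index_eq)
    moreover have "dv a ! 0 \<in> set (dv a)" "dv a ! 1 \<in> set (dv a)" using l k by (auto intro!: nth_mem)
    ultimately obtain x' where x': "x' \<in> set (dv a)" "x' \<noteq> x"
    proof (cases "dv a ! 0 = x")
      case True then show ?thesis using that \<open>dv a ! 0 \<noteq> dv a ! 1\<close> \<open>dv a ! 1 \<in> set (dv a)\<close> by auto
    next
      case False then show ?thesis using that \<open>dv a ! 0 \<in> set (dv a)\<close> by auto
    qed
    show ?thesis using 2 x' xa by (intro exI[of _ "Inl x'"]) (auto intro: fg_memI)
  qed
next
  fix e assume "e \<in> fg_edges A dv"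
  then obtain x a where xa: "e = {Inl x, Inr a}" "a \<in> A" "x \<in> set (dv a)" unfolding fg_mem by blast
  have l: "length (dv a) = k" "distinct (dv a)" using dv xa by auto
  have d: "dv a ! 0 \<noteq> dv a ! 1" "dv a ! 0 \<noteq> dv a ! 2" "dv a ! 1 \<noteq> dv a ! 2"
    using l k by (simp_all add: nth_eq_iff_index_eq)
  have m: "dv a ! 0 \<in> set (dv a)" "dv a ! 1 \<in> set (dv a)" "dv a ! 2 \<in> set (dv a)"
    using l k by (auto intro!: nth_mem)
  show "\<exists>a\<in>e. \<exists>x1 x2 x3. x1 \<noteq> x2 \<and> x1 \<noteq> x3 \<and> x2 \<noteq> x3 \<and> x1 \<noteq> a \<and> x2 \<noteq> a \<and> x3 \<noteq> a
                 \<and> {a,x1} \<in> fg_edges A dv \<and> {a,x2} \<in> fg_edges A dv \<and> {a,x3} \<in> fg_edges A dv"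
  proof (rule bexI[of _ "Inr a"])
    show "Inr a \<in> e" using xa by simp
    have e0: "{Inr a, Inl (dv a ! 0)} \<in> fg_edges A dv" using m xa by (intro fg_memI) auto
    have e1: "{Inr a, Inl (dv a ! 1)} \<in> fg_edges A dv" using m xa by (intro fg_memI) auto
    have e2: "{Inr a, Inl (dv a ! 2)} \<in> fg_edges A dv" using m xa by (intro fg_memI) auto
    show "\<exists>x1 x2 x3. x1 \<noteq> x2 \<and> x1 \<noteq> x3 \<and> x2 \<noteq> x3 \<and> x1 \<noteq> Inr a \<and> x2 \<noteq> Inr a \<and> x3 \<noteq> Inr a
                 \<and> {Inr a,x1} \<in> fg_edges A dv \<and> {Inr a,x2} \<in> fg_edges A dv \<and> {Inr a,x3} \<in> fg_edges A dv"
      apply (rule exI[of _ "Inl (dv a ! 0)"])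
      apply (rule exI[of _ "Inl (dv a ! 1)"])
      apply (rule exI[of _ "Inl (dv a ! 2)"])
      using d e0 e1 e2 by simp
  qed
next
  obtain a where a: "a \<in> A" using ne by auto
  then have "dv a ! 0 \<in> set (dv a)" using dv k by (auto intro!: nth_mem)
  then have "{Inl (dv a ! 0), Inr a} \<in> fg_edges A dv" by (rule fg_memI'[OF a])
  then show "fg_edges A dv \<noteq> {}" by auto
qed

lemma sat:
  assumes k: "k \<ge> 3" and fin: "finite A"
  shows "(\<forall>a\<in>A. length (dv a) = k \<and> distinct (dv a) \<and> length (\<tau> a) = k)
    \<Longrightarrow> (\<forall>C C'. is_cycle (fg_edges A dv) C \<and> is_cycle (fg_edges A dv) C' \<longrightarrow> C = C')
    \<Longrightarrow> \<exists>\<sigma>. \<forall>a\<in>A. \<exists>i<k. \<sigma> (dv a ! i) = \<tau> a ! i"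
  using fin
proof (induction A rule: finite_remove_induct)
  case empty then show ?case by simp
next
  case (remove A)
  show ?case
  proof (cases "\<exists>a\<in>A. \<exists>i<k. \<forall>b\<in>A. b \<noteq> a \<longrightarrow> dv a ! i \<notin> set (dv b)")
    case True
    then obtain a i where ai: "a \<in> A" "i < k" "\<forall>b\<in>A. b \<noteq> a \<longrightarrow> dv a ! i \<notin> set (dv b)" by blast
    have h1: "\<forall>b\<in>A - {a}. length (dv b) = k \<and> distinct (dv b) \<and> length (\<tau> b) = k" using remove.prems by auto
    have h2: "\<forall>C C'. is_cycle (fg_edges (A - {a}) dv) C \<and> is_cycle (fg_edges (A - {a}) dv) C' \<longrightarrow> C = C'"
    proof (intro allI impI)
      fix C C' assume "is_cycle (fg_edges (A - {a}) dv) C \<and> is_cycle (fg_edges (A - {a}) dv) C'"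
      then have "is_cycle (fg_edges A dv) C" "is_cycle (fg_edges A dv) C'"
        using is_cycle_mono fg_mono[of "A - {a}" A dv] by blast+
      then show "C = C'" using remove.prems(2) by blast
    qed
    obtain \<sigma> where \<sigma>: "\<forall>b\<in>A - {a}. \<exists>j<k. \<sigma> (dv b ! j) = \<tau> b ! j" using remove.IH[OF ai(1) h1 h2] by blast
    define \<sigma>' where "\<sigma>' = \<sigma>(dv a ! i := \<tau> a ! i)"
    have "\<forall>b\<in>A. \<exists>j<k. \<sigma>' (dv b ! j) = \<tau> b ! j"
    proof
      fix b assume b: "b \<in> A"
      show "\<exists>j<k. \<sigma>' (dv b ! j) = \<tau> b ! j"
      proof (cases "b = a")
        case True then show ?thesis using ai unfolding \<sigma>'_def by auto
      next
        case False
        then have "b \<in> A - {a}" using b by simp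
        then obtain j where j: "j < k" "\<sigma> (dv b ! j) = \<tau> b ! j" using \<sigma> by blast
        have "dv b ! j \<in> set (dv b)" using j remove.prems(1) b by (auto intro!: nth_mem)
        moreover have "dv a ! i \<notin> set (dv b)" using ai(3) b False by blast
        ultimately have "dv b ! j \<noteq> dv a ! i" by metis
        then show ?thesis using j unfolding \<sigma>'_def by auto
      qed
    qed
    then show ?thesis by blast
  next
    case False
    have np: "\<forall>a\<in>A. \<forall>x\<in>set (dv a). \<exists>b\<in>A. b \<noteq> a \<and> x \<in> set (dv b)"
    proof (intro ballI)
      fix a x assume a: "a \<in> A" and x: "x \<in> set (dv a)"
      then obtain i where i: "i < length (dv a)" "dv a ! i = x" by (auto simp: in_set_conv_nth)
      then have "i < k" using a remove.prems(1) by auto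
      then have "\<not> (\<forall>b\<in>A. b \<noteq> a \<longrightarrow> dv a ! i \<notin> set (dv b))" using False a by blast
      then show "\<exists>b\<in>A. b \<noteq> a \<and> x \<in> set (dv b)" using i by blast
    qed
    have dvA: "\<forall>a\<in>A. length (dv a) = k \<and> distinct (dv a)" using remove.prems(1) by blast
    obtain C1 C2 where "is_cycle (fg_edges A dv) C1" "is_cycle (fg_edges A dv) C2" "C1 \<noteq> C2"
      using no_private_two_cycles[OF k remove.hyps(1,2) dvA np] by blast
    then show ?thesis using remove.prems(2) by blast
  qed
qed

lemma UNI_thm:
  assumes k: "k \<ge> 3"
  shows "UNI (P_kBAL k) k"
  unfolding UNI_def
proof (intro allI impI)
  fix V A :: "nat set" and dv :: "nat \<Rightarrow> nat list" and ps :: "nat \<Rightarrow> bool list \<Rightarrow> real"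
  assume h: "finite V \<and> finite A \<and>
        (\<forall>a\<in>A. length (dv a) = k \<and> distinct (dv a) \<and> set (dv a) \<subseteq> V \<and> ps a \<in> set_pmf (P_kBAL k)) \<and>
        unicyclic (fg_vertices V A) (fg_edges A dv)"
  have "\<forall>a\<in>A. \<exists>t. length t = k \<and> ps a = psi_bal k t" using h unfolding set_P by (auto simp: cube_def)
  then obtain \<tau> where \<tau>: "\<forall>a\<in>A. length (\<tau> a) = k \<and> ps a = psi_bal k (\<tau> a)" by metis
  have uq: "\<forall>C C'. is_cycle (fg_edges A dv) C \<and> is_cycle (fg_edges A dv) C' \<longrightarrow> C = C'"
    using h unfolding unicyclic_def by blast
  obtain \<sigma> where \<sigma>: "\<forall>a\<in>A. \<exists>i<k. \<sigma> (dv a ! i) = \<tau> a ! i"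
    using sat[OF k, of A dv \<tau>] h \<tau> uq by blast
  have "0 < ps a (map \<sigma> (dv a))" if a: "a \<in> A" for a
  proof -
    obtain i where i: "i < k" "\<sigma> (dv a ! i) = \<tau> a ! i" using \<sigma> a by blast
    have l: "length (dv a) = k" using h a by blast
    have "psi_bal k (\<tau> a) (map \<sigma> (dv a)) > 0"
      by (rule psi_pos[OF k _ i(1)]) (use l i in auto)
    then show ?thesis using \<tau> a by simp
  qed
  then show "\<exists>\<sigma>. 0 < (\<Prod>a\<in>A. ps a (map \<sigma> (dv a)))" by (intro exI[of _ \<sigma>] prod_pos) auto
qed

theorem mainTheorem15:
  fixes k :: nat
  assumes "k \<ge> 3"
  shows "SYM (P_kBAL k) k \<and> BAL (P_kBAL k) k \<and> MIN_prop (P_kBAL k) k \<and> UNI (P_kBAL k) k"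
  using SYM_thm[OF assms] BAL_thm MIN_thm[OF assms] UNI_thm[OF assms] by blast

end
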